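(* Assume $h^\ell_\eta=\hbar$ for all $\ell=1,\dots,m$. Then for every $r\in\mathcal O$ one has $\pi_r\mathcal D=\mathcal D$ and $\pi_rI_{\mathcal D}=I_{\mathcal D}$.
   Context: Let $R$ be an irreducible reduced root system of rank $n$ in $V=\mathbb C^n$, standard bilinear form $(\cdot,\cdot)$, $\beta^\vee=2\beta/(\beta,\beta)$, Weyl group $W$, positive roots $R_+$, simple roots $\Delta=\{\alpha_1,\dots,\alpha_n\}$, maximal root $\theta=\sum_i n_i\alpha_i$, coroot lattice $Q^\vee$, fundamental coweights $b_i$ ($(\alpha_i,b_j)=\delta_{ij}$). Fix $\hbar\in\mathbb C\setminus\pi i\mathbb Q$, $\hbar\ne0$. For $\lambda\in V$, $\tau(\lambda)$ is the translation $x\mapsto x+\hbar\lambda$. Let $\mathcal O=\{0\}\cup\{r:n_r=1\}$; $\pi_0=1$ and for $r\ne0$, $\pi_r=\tau(b_r)u_r^{-1}$, where $u_r\in W$ is the element preserving $\{-\theta,\alpha_1,\dots,\alpha_n\}$ with $u_r(\alpha_r)=-\theta$. $\pi_r$ acts on the space $\mathcal F$ of smooth $2\pi iQ^\vee$-periodic functions on $V$ by $(\pi_rf)(x)=f(\pi_r^{-1}x)$. Let $\eta:R\to\mathbb C$ be $W$-invariant, $H_\eta(S)=\{x:(\alpha,x)=\eta_\alpha\ \forall\alpha\in S\}$; fix $S_0\subset\Delta$, $W_+=\{w\in W: wS_0\subset R_+\}$, $\mathcal D_0=H_\eta(S_0)$, $\mathcal D=\bigcup_{w\in W_+}w\mathcal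 D_0$, $I_{\mathcal D}=\{f\in\mathcal F:f|_{\mathcal D}=0\}$. Let $R_0=\mathrm{span}(S_0)\cap R=\bigsqcup_{\ell=1}^mR_\ell$ be the decomposition into irreducible components, $S_\ell=S_0\cap R_\ell=\{\alpha^\ell_1,\dots,\alpha^\ell_{k_\ell}\}$, $\theta_\ell=\sum_j n^\ell_j\alpha^\ell_j$ the maximal root of $R_\ell$, and the generalized Coxeter number $h^\ell_\eta=\eta_{\theta_\ell}+\sum_{j=1}^{k_\ell}n^\ell_j\eta_{\alpha^\ell_j}$. *)

theory Defs
  imports "HOL-Analysis.Analysis"
begin

text \<open>Standard (complex-bilinear, not Hermitian) form on V.\<close>
definition bil :: "complex^'n \<Rightarrow> complex^'n \<Rightarrow> complex" where
  "bil x y = (\<Sum>i\<in>UNIV. x$i * y$i)"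

definition coroot :: "complex^'n \<Rightarrow> complex^'n" where
  "coroot \<beta> = (2 / bil \<beta> \<beta>) *s \<beta>"

definition reflect :: "complex^'n \<Rightarrow> complex^'n \<Rightarrow> complex^'n" where
  "reflect \<alpha> x = x - bil (coroot \<alpha>) x *s \<alpha>"

text \<open>A (crystallographic) root system spanning V; roots are real vectors
  (a real root system complexified).\<close>
definition root_system :: "(complex^'n) set \<Rightarrow> bool" where
  "root_system R \<longleftrightarrow> finite R \<and> 0 \<notin> R
     \<and> (\<forall>\<beta>\<in>R. \<forall>i. Im (\<beta>$i) = 0)
     \<and> (\<forall>x. \<exists>c. x = (\<Sum>\<beta>\<in>R. c \<beta> *s \<beta>))
     \<and> (\<forall>\<alpha>\<in>R. \<forall>\<beta>\<in>R. reflect \<alpha> \<beta> \<in> R)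
     \<and> (\<forall>\<alpha>\<in>R. \<forall>\<beta>\<in>R. bil (coroot \<alpha>) \<beta> \<in> \<int>)"

definition reduced_rs :: "(complex^'n) set \<Rightarrow> bool" where
  "reduced_rs R \<longleftrightarrow> (\<forall>\<alpha>\<in>R. \<forall>c. c *s \<alpha> \<in> R \<longrightarrow> c = 1 \<or> c = -1)"

definition irreducible_rs :: "(complex^'n) set \<Rightarrow> bool" where
  "irreducible_rs R \<longleftrightarrow> \<not> (\<exists>A B. A \<union> B = R \<and> A \<inter> B = {} \<and> A \<noteq> {} \<and> B \<noteq> {}
                               \<and> (\<forall>a\<in>A. \<forall>b\<in>B. bil a b = 0))"

inductive_set weyl_group :: "(complex^'n) set \<Rightarrow> (complex^'n \<Rightarrow> complex^'n) set"
  for R :: "(complex^'n) set" where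
  weyl_id: "id \<in> weyl_group R"
| weyl_step: "w \<in> weyl_group R \<Longrightarrow> \<alpha> \<in> R \<Longrightarrow> reflect \<alpha> \<circ> w \<in> weyl_group R"

definition nonneg_comb :: "(complex^'n) set \<Rightarrow> complex^'n \<Rightarrow> bool" where
  "nonneg_comb S v \<longleftrightarrow> (\<exists>k :: complex^'n \<Rightarrow> nat. v = (\<Sum>\<gamma>\<in>S. of_nat (k \<gamma>) *s \<gamma>))"

definition is_base :: "(complex^'n) set \<Rightarrow> ('n \<Rightarrow> complex^'n) \<Rightarrow> bool" where
  "is_base R \<alpha> \<longleftrightarrow> inj \<alpha> \<and> range \<alpha> \<subseteq> R
     \<and> (\<forall>c. (\<Sum>i\<in>UNIV. c i *s \<alpha> i) = 0 \<longrightarrow> (\<forall>i. c i = 0))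
     \<and> (\<forall>\<beta>\<in>R. nonneg_comb (range \<alpha>) \<beta> \<or> nonneg_comb (range \<alpha>) (- \<beta>))"

definition pos_roots :: "(complex^'n) set \<Rightarrow> ('n \<Rightarrow> complex^'n) \<Rightarrow> (complex^'n) set" where
  "pos_roots R \<alpha> = {\<beta>\<in>R. nonneg_comb (range \<alpha>) \<beta>}"

definition is_max_root :: "(complex^'n) set \<Rightarrow> (complex^'n) set \<Rightarrow> complex^'n \<Rightarrow> bool" where
  "is_max_root C S \<theta> \<longleftrightarrow> \<theta> \<in> C \<and> (\<forall>\<beta>\<in>C. nonneg_comb S (\<theta> - \<beta>))"

definition coroot_lattice :: "(complex^'n) set \<Rightarrow> (complex^'n) set" where
  "coroot_lattice R = {(\<Sum>\<beta>\<in>R. of_int (k \<beta>) *s coroot \<beta>) | k. True}"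

definition R0 :: "(complex^'n) set \<Rightarrow> (complex^'n) set \<Rightarrow> (complex^'n) set" where
  "R0 R S0 = {\<beta>\<in>R. \<exists>c. \<beta> = (\<Sum>\<gamma>\<in>S0. c \<gamma> *s \<gamma>)}"

definition rs_components :: "(complex^'n) set \<Rightarrow> (complex^'n) set set" where
  "rs_components Rz =
     {{\<beta>\<in>Rz. (\<alpha>, \<beta>) \<in> {(x, y). x \<in> Rz \<and> y \<in> Rz \<and> bil x y \<noteq> 0}\<^sup>*} | \<alpha>. \<alpha> \<in> Rz}"

text \<open>Generalized Coxeter number condition h^l_eta = hbar for every component R_l
  (with S_l = S_0 \<inter> R_l, theta_l = sum_j n^l_j alpha^l_j the maximal root of R_l).\<close>
definition coxeter_condition ::
  "(complex^'n) set \<Rightarrow> (complex^'n) set \<Rightarrow> (complex^'n \<Rightarrow> complex) \<Rightarrow> complex \<Rightarrow> bool" where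
  "coxeter_condition R S0 \<eta> hbar \<longleftrightarrow>
     (\<forall>C\<in>rs_components (R0 R S0). \<forall>\<theta>c c.
        is_max_root C (S0 \<inter> C) \<theta>c \<and> \<theta>c = (\<Sum>\<gamma>\<in>S0 \<inter> C. c \<gamma> *s \<gamma>)
        \<longrightarrow> \<eta> \<theta>c + (\<Sum>\<gamma>\<in>S0 \<inter> C. c \<gamma> * \<eta> \<gamma>) = hbar)"

definition Hyp :: "(complex^'n \<Rightarrow> complex) \<Rightarrow> (complex^'n) set \<Rightarrow> (complex^'n) set" where
  "Hyp \<eta> S = {x. \<forall>\<alpha>\<in>S. bil \<alpha> x = \<eta> \<alpha>}"

definition Wplus :: "(complex^'n) set \<Rightarrow> ('n \<Rightarrow> complex^'n) \<Rightarrow> (complex^'n) set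
                      \<Rightarrow> (complex^'n \<Rightarrow> complex^'n) set" where
  "Wplus R \<alpha> S0 = {w \<in> weyl_group R. w ` S0 \<subseteq> pos_roots R \<alpha>}"

definition Dset :: "(complex^'n) set \<Rightarrow> ('n \<Rightarrow> complex^'n) \<Rightarrow> (complex^'n \<Rightarrow> complex)
                     \<Rightarrow> (complex^'n) set \<Rightarrow> (complex^'n) set" where
  "Dset R \<alpha> \<eta> S0 = (\<Union>w\<in>Wplus R \<alpha> S0. w ` Hyp \<eta> S0)"

text \<open>C^k in the real sense (V viewed as a real vector space): C^0 = continuous,
  C^(k+1) = differentiable with all directional derivatives C^k.\<close>
fun Ck :: "nat \<Rightarrow> ('a::real_normed_vector \<Rightarrow> 'b::real_normed_vector) \<Rightarrow> bool" where
  "Ck 0 f \<longleftrightarrow> continuous_on UNIV f"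
| "Ck (Suc k) f \<longleftrightarrow> (\<forall>x. f differentiable (at x))
                    \<and> (\<forall>v. Ck k (\<lambda>x. frechet_derivative f (at x) v))"

definition smooth_fun :: "('a::real_normed_vector \<Rightarrow> 'b::real_normed_vector) \<Rightarrow> bool" where
  "smooth_fun f \<longleftrightarrow> (\<forall>k. Ck k f)"

definition Fspace :: "(complex^'n) set \<Rightarrow> (complex^'n \<Rightarrow> complex) set" where
  "Fspace R = {f. smooth_fun f \<and>
     (\<forall>x. \<forall>l\<in>coroot_lattice R. f (x + (2 * of_real pi * \<i>) *s l) = f x)}"

definition ideal_D :: "(complex^'n) set \<Rightarrow> (complex^'n) set \<Rightarrow> (complex^'n \<Rightarrow> complex) set" where
  "ideal_D R D = {f \<in> Fspace R. \<forall>x\<in>D. f x = 0}"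

text \<open>r ranges over 'n option: None stands for r = 0, Some s for the index s.
  pi_0 = 1 and pi_s = tau(b_s) u_s^(-1), i.e. x |-> u_s^(-1) x + hbar b_s.\<close>
definition pi_map :: "('n \<Rightarrow> (complex^'n \<Rightarrow> complex^'n)) \<Rightarrow> ('n \<Rightarrow> complex^'n) \<Rightarrow> complex
                       \<Rightarrow> 'n option \<Rightarrow> complex^'n \<Rightarrow> complex^'n" where
  "pi_map u b hbar r = (case r of None \<Rightarrow> id | Some s \<Rightarrow> (\<lambda>x. inv (u s) x + hbar *s b s))"

definition pi_fun :: "('n \<Rightarrow> (complex^'n \<Rightarrow> complex^'n)) \<Rightarrow> ('n \<Rightarrow> complex^'n) \<Rightarrow> complex
                       \<Rightarrow> 'n option \<Rightarrow> (complex^'n \<Rightarrow> complex) \<Rightarrow> (complex^'n \<Rightarrow> complex)" where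
  "pi_fun u b hbar r f = f \<circ> inv (pi_map u b hbar r)"

definition minusc_set :: "('n \<Rightarrow> nat) \<Rightarrow> 'n option set" where
  "minusc_set n = insert None (Some ` {r. n r = 1})"

end

theory Submission
  imports Defs
begin


lemma bil_sym: "bil x y = bil y x"
  unfolding bil_def by (simp add: mult.commute)
lemma bil_add_left: "bil (x + y) z = bil x z + bil y z"
  unfolding bil_def by (simp add: distrib_right sum.distrib)
lemma bil_add_right: "bil z (x + y) = bil z x + bil z y"
  unfolding bil_def by (simp add: distrib_left sum.distrib)
lemma bil_scale_left: "bil (c *s x) z = c * bil x z"
  unfolding bil_def by (simp add: sum_distrib_left mult.assoc)
lemma bil_scale_right: "bil z (c *s x) = c * bil z x"
  unfolding bil_def by (simp add: sum_distrib_left algebra_simps)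
lemma bil_minus_left: "bil (- x) z = - bil x z"
  unfolding bil_def by (simp add: sum_negf)
lemma bil_minus_right: "bil z (- x) = - bil z x"
  unfolding bil_def by (simp add: sum_negf)
lemma bil_diff_left: "bil (x - y) z = bil x z - bil y z"
  unfolding bil_def by (simp add: left_diff_distrib sum_subtractf)
lemma bil_diff_right: "bil z (x - y) = bil z x - bil z y"
  unfolding bil_def by (simp add: right_diff_distrib sum_subtractf)
lemma bil_zero_left[simp]: "bil 0 z = 0" unfolding bil_def by simp
lemma bil_zero_right[simp]: "bil z 0 = 0" unfolding bil_def by simp
lemma bil_sum_left: "bil (\<Sum>i\<in>A. f i) z = (\<Sum>i\<in>A. bil (f i) z)"
  by (induction A rule: infinite_finite_induct) (auto simp: bil_add_left)
lemma bil_sum_right: "bil z (\<Sum>i\<in>A. f i) = (\<Sum>i\<in>A. bil z (f i))"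
  by (induction A rule: infinite_finite_induct) (auto simp: bil_add_right)

lemmas bil_simps = bil_add_left bil_add_right bil_scale_left bil_scale_right bil_minus_left
  bil_minus_right bil_diff_left bil_diff_right bil_sum_left bil_sum_right

definition realv :: "complex^'n \<Rightarrow> bool" where
  "realv x \<longleftrightarrow> (\<forall>i. Im (x$i) = 0)"

lemma bil_real: assumes "realv x" "realv y" shows "bil x y = of_real (\<Sum>i\<in>UNIV. Re (x$i) * Re (y$i))"
proof -
  have "x$i * y$i = of_real (Re (x$i) * Re (y$i))" for i
    using assms unfolding realv_def by (simp add: complex_eq_iff)
  then show ?thesis unfolding bil_def by simp
qed

lemma bil_self_pos: assumes "realv x" "x \<noteq> 0"
  shows "Re (bil x x) > 0" "Im (bil x x) = 0" "bil x x \<noteq> 0"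
proof -
  obtain j where j: "x$j \<noteq> 0" using assms(2) by (metis vec_eq_iff zero_index)
  have rj: "Re (x$j) \<noteq> 0" using j assms(1) unfolding realv_def by (simp add: complex_eq_iff)
  have "(\<Sum>i\<in>UNIV. Re (x$i) * Re (x$i)) \<ge> Re (x$j) * Re (x$j)"
    by (rule member_le_sum) auto
  moreover have "Re (x$j) * Re (x$j) > 0" using rj by (auto simp: zero_less_mult_iff linorder_neq_iff)
  ultimately have p: "(\<Sum>i\<in>UNIV. Re (x$i) * Re (x$i)) > 0" by linarith
  show "Re (bil x x) > 0" "Im (bil x x) = 0" using p bil_real[OF assms(1) assms(1)] by auto
  then show "bil x x \<noteq> 0" by auto
qed


lemma reflect_bil: "bil (coroot a) x = 2 * bil a x / bil a a"
  unfolding coroot_def by (simp add: bil_scale_left)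

lemma reflect_add: "reflect a (x + y) = reflect a x + reflect a y"
  unfolding reflect_def by (simp add: bil_add_right vector_sadd_rdistrib algebra_simps)
lemma reflect_scale: "reflect a (c *s x) = c *s reflect a x"
  unfolding reflect_def by (simp add: bil_scale_right vector_ssub_ldistrib vector_smult_assoc)
lemma reflect_minus: "reflect a (- x) = - reflect a x"
  by (metis reflect_scale vector_sneg_minus1)
lemma reflect_diff: "reflect a (x - y) = reflect a x - reflect a y"
  by (metis diff_conv_add_uminus reflect_add reflect_minus)
lemma reflect_self: "bil a a \<noteq> 0 \<Longrightarrow> reflect a a = - a"
proof -
  assume h: "bil a a \<noteq> 0"
  have "reflect a a = a - 2 *s a" unfolding reflect_def reflect_bil using h by simp
  also have "\<dots> = - a" by (simp add: vec_eq_iff)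
  finally show ?thesis .
qed
lemma reflect_orth: "bil a x = 0 \<Longrightarrow> reflect a x = x"
  unfolding reflect_def reflect_bil by simp
lemma reflect_bil_a: "bil a a \<noteq> 0 \<Longrightarrow> bil a (reflect a x) = - bil a x"
  unfolding reflect_def reflect_bil by (simp add: bil_diff_right bil_scale_right)
lemma reflect_bil_pres: assumes h: "bil a a \<noteq> 0" shows "bil (reflect a x) (reflect a y) = bil x y"
proof -
  define c where "c = 2 * bil a x / bil a a"
  have "bil (reflect a x) (reflect a y) = bil x (reflect a y) - c * bil a (reflect a y)"
    unfolding reflect_def[of a x] reflect_bil c_def by (simp add: bil_diff_left bil_scale_left)
  also have "\<dots> = bil x y"
    unfolding reflect_bil_a[OF h] unfolding reflect_def reflect_bil c_def
    by (simp add: bil_diff_right bil_scale_right bil_sym[of a x])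
  finally show ?thesis .
qed
lemma reflect_invol: assumes h: "bil a a \<noteq> 0" shows "reflect a (reflect a x) = x"
proof -
  have "reflect a (reflect a x) = reflect a (x - bil (coroot a) x *s a)"
    by (simp add: reflect_def[of a x])
  also have "\<dots> = reflect a x - bil (coroot a) x *s reflect a a"
    by (simp add: reflect_diff reflect_scale)
  also have "\<dots> = (x - bil (coroot a) x *s a) + bil (coroot a) x *s a"
    using h by (simp add: reflect_self vector_smult_rneg reflect_def[of a x])
  also have "\<dots> = x" by simp
  finally show ?thesis .
qed



definition nondeg :: "(complex^'n) set \<Rightarrow> bool" where
  "nondeg C \<longleftrightarrow> (\<forall>c\<in>C. bil c c \<noteq> 0)"

lemma weyl_add: "w \<in> weyl_group C \<Longrightarrow> w (x + y) = w x + w y"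
  by (induction w arbitrary: x y rule: weyl_group.induct) (auto simp: reflect_add)
lemma weyl_scale: "w \<in> weyl_group C \<Longrightarrow> w (c *s x) = c *s w x"
  by (induction w arbitrary: x rule: weyl_group.induct) (auto simp: reflect_scale)
lemma weyl_minus: "w \<in> weyl_group C \<Longrightarrow> w (- x) = - w x"
  by (metis weyl_scale vector_sneg_minus1)
lemma weyl_diff: "w \<in> weyl_group C \<Longrightarrow> w (x - y) = w x - w y"
  by (metis diff_conv_add_uminus weyl_add weyl_minus)
lemma weyl_zero: "w \<in> weyl_group C \<Longrightarrow> w 0 = 0"
  by (metis weyl_scale vector_smult_lzero)
lemma weyl_sum: "w \<in> weyl_group C \<Longrightarrow> w (\<Sum>i\<in>A. f i) = (\<Sum>i\<in>A. w (f i))"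
  by (induction A rule: infinite_finite_induct) (auto simp: weyl_add weyl_zero)
lemma weyl_bil: "w \<in> weyl_group C \<Longrightarrow> nondeg C \<Longrightarrow> bil (w x) (w y) = bil x y"
  by (induction w arbitrary: x y rule: weyl_group.induct) (auto simp: reflect_bil_pres nondeg_def)
lemma weyl_comp: "w1 \<in> weyl_group C \<Longrightarrow> w2 \<in> weyl_group C \<Longrightarrow> w1 \<circ> w2 \<in> weyl_group C"
  by (induction w1 rule: weyl_group.induct) (auto simp: comp_assoc intro: weyl_group.intros)
lemma reflect_weyl: "a \<in> C \<Longrightarrow> reflect a \<in> weyl_group C"
  using weyl_group.weyl_step[OF weyl_group.weyl_id, of a C] by simp
lemma weyl_inverse: "w \<in> weyl_group C \<Longrightarrow> nondeg C \<Longrightarrow>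
    \<exists>w'\<in>weyl_group C. w' \<circ> w = id \<and> w \<circ> w' = id"
proof (induction w rule: weyl_group.induct)
  case weyl_id then show ?case using weyl_group.weyl_id[of C] by (intro bexI[of _ id]) auto
next
  case (weyl_step w a)
  obtain w' where w': "w' \<in> weyl_group C" "w' \<circ> w = id" "w \<circ> w' = id"
    using weyl_step.IH[OF weyl_step.prems] by blast
  have aa: "bil a a \<noteq> 0" using weyl_step nondeg_def by auto
  have "w' \<circ> reflect a \<in> weyl_group C" using weyl_comp[OF w'(1) reflect_weyl[OF weyl_step(2)]] .
  moreover have "(w' \<circ> reflect a) \<circ> (reflect a \<circ> w) = id"
    using w' reflect_invol[OF aa] by (simp add: fun_eq_iff comp_def; metis comp_apply id_apply)
  moreover have "(reflect a \<circ> w) \<circ> (w' \<circ> reflect a) = id"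
    using w' reflect_invol[OF aa] by (simp add: fun_eq_iff comp_def; metis comp_apply id_apply)
  ultimately show ?case by blast
qed
lemma weyl_bij: "nondeg C \<Longrightarrow> w \<in> weyl_group C \<Longrightarrow> bij w"
  using weyl_inverse[of w C] by (metis o_bij)
lemma weyl_inv_in: "nondeg C \<Longrightarrow> w \<in> weyl_group C \<Longrightarrow> inv w \<in> weyl_group C"
proof -
  assume a: "nondeg C" "w \<in> weyl_group C"
  then obtain w' where w': "w' \<in> weyl_group C" "w' \<circ> w = id" "w \<circ> w' = id" using weyl_inverse[of w C] by blast
  then have "inv w = w'" by (metis inv_unique_comp)
  then show ?thesis using w' by simp
qed
lemma weyl_inv_l: "nondeg C \<Longrightarrow> w \<in> weyl_group C \<Longrightarrow> inv w (w x) = x"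
  using weyl_bij by (metis bij_inv_eq_iff)
lemma weyl_inv_r: "nondeg C \<Longrightarrow> w \<in> weyl_group C \<Longrightarrow> w (inv w x) = x"
  using weyl_bij by (metis bij_inv_eq_iff)
lemma weyl_mono: "w \<in> weyl_group C \<Longrightarrow> C \<subseteq> C' \<Longrightarrow> w \<in> weyl_group C'"
  by (induction w rule: weyl_group.induct) (auto intro: weyl_group.intros)
lemma weyl_fix: "w \<in> weyl_group C \<Longrightarrow> (\<forall>c\<in>C. bil c x = 0) \<Longrightarrow> w x = x"
  by (induction w rule: weyl_group.induct) (auto simp: reflect_orth)
lemma weyl_pres: "w \<in> weyl_group C \<Longrightarrow> (\<forall>a\<in>C. \<forall>c\<in>C. reflect a c \<in> C) \<Longrightarrow> x \<in> C \<Longrightarrow> w x \<in> C"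
  by (induction w rule: weyl_group.induct) auto



locale RSB =
  fixes R :: "(complex^'n) set" and \<alpha> :: "'n \<Rightarrow> complex^'n" and b :: "'n \<Rightarrow> complex^'n"
  assumes rs: "root_system R" and red: "reduced_rs R" and base: "is_base R \<alpha>"
    and cow: "\<forall>i j. bil (\<alpha> i) (b j) = (if i = j then 1 else 0)"
begin

lemma finR: "finite R" and zero_notin: "0 \<notin> R" and realR: "\<beta> \<in> R \<Longrightarrow> realv \<beta>"
  and reflR: "a \<in> R \<Longrightarrow> c \<in> R \<Longrightarrow> reflect a c \<in> R"
  and intR: "a \<in> R \<Longrightarrow> c \<in> R \<Longrightarrow> bil (coroot a) c \<in> \<int>"
  using rs unfolding root_system_def realv_def by auto

lemma nondegR: "nondeg R"
  unfolding nondeg_def using bil_self_pos(3) realR zero_notin by metis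

lemma bilRR: "\<beta> \<in> R \<Longrightarrow> bil \<beta> \<beta> \<noteq> 0" using nondegR nondeg_def by auto

lemma minusR: "\<beta> \<in> R \<Longrightarrow> - \<beta> \<in> R"
  using reflR[of \<beta> \<beta>] reflect_self[OF bilRR] by simp

lemma inj_alpha: "inj \<alpha>" and alphaR: "\<alpha> i \<in> R"
  and alpha_indep: "(\<Sum>i\<in>UNIV. c i *s \<alpha> i) = 0 \<Longrightarrow> c i = 0"
  and root_sign: "\<beta> \<in> R \<Longrightarrow> nonneg_comb (range \<alpha>) \<beta> \<or> nonneg_comb (range \<alpha>) (- \<beta>)"
  using base unfolding is_base_def by auto

definition coef :: "'n \<Rightarrow> complex^'n \<Rightarrow> complex" where
  "coef i x = bil x (b i)"

lemma coef_add: "coef i (x + y) = coef i x + coef i y" unfolding coef_def by (simp add: bil_add_left)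
lemma coef_diff: "coef i (x - y) = coef i x - coef i y" unfolding coef_def by (simp add: bil_diff_left)
lemma coef_minus: "coef i (- x) = - coef i x" unfolding coef_def by (simp add: bil_minus_left)
lemma coef_scale: "coef i (c *s x) = c * coef i x" unfolding coef_def by (simp add: bil_scale_left)
lemma coef_sum: "coef i (\<Sum>j\<in>A. f j) = (\<Sum>j\<in>A. coef i (f j))" unfolding coef_def by (simp add: bil_sum_left)
lemma coef_zero[simp]: "coef i 0 = 0" unfolding coef_def by simp
lemma coef_alpha: "coef i (\<alpha> j) = (if j = i then 1 else 0)" unfolding coef_def using cow by simp

lemma coef_comb: "coef j (\<Sum>i\<in>UNIV. c i *s \<alpha> i) = c j"
proof -
  have "(\<Sum>i\<in>UNIV. c i * (if i = j then 1 else 0)) = (\<Sum>i\<in>UNIV. if i = j then c i else 0)"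
    by (rule sum.cong) auto
  then show ?thesis by (simp add: coef_sum coef_scale coef_alpha)
qed

lemma sum_range_alpha: "(\<Sum>\<gamma>\<in>range \<alpha>. f \<gamma>) = (\<Sum>i\<in>UNIV. f (\<alpha> i))"
  using sum.reindex[OF inj_alpha, of f] by simp

definition SP :: "complex^'n \<Rightarrow> bool" where
  "SP x \<longleftrightarrow> x = (\<Sum>i\<in>UNIV. coef i x *s \<alpha> i)"

lemma SP_comb: "SP (\<Sum>i\<in>UNIV. c i *s \<alpha> i)"
  unfolding SP_def coef_comb ..

lemma SP_root: assumes "\<beta> \<in> R" shows "SP \<beta>"
proof -
  from root_sign[OF assms] obtain k where
    "\<beta> = (\<Sum>\<gamma>\<in>range \<alpha>. of_nat (k \<gamma>) *s \<gamma>) \<or> - \<beta> = (\<Sum>\<gamma>\<in>range \<alpha>. of_nat (k \<gamma>) *s \<gamma>)"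
    unfolding nonneg_comb_def by blast
  then show ?thesis
  proof
    assume "\<beta> = (\<Sum>\<gamma>\<in>range \<alpha>. of_nat (k \<gamma>) *s \<gamma>)"
    then have "\<beta> = (\<Sum>i\<in>UNIV. of_nat (k (\<alpha> i)) *s \<alpha> i)" unfolding sum_range_alpha .
    then show ?thesis using SP_comb by simp
  next
    assume "- \<beta> = (\<Sum>\<gamma>\<in>range \<alpha>. of_nat (k \<gamma>) *s \<gamma>)"
    then have "- \<beta> = (\<Sum>i\<in>UNIV. of_nat (k (\<alpha> i)) *s \<alpha> i)" unfolding sum_range_alpha .
    then have "\<beta> = (\<Sum>i\<in>UNIV. (- of_nat (k (\<alpha> i))) *s \<alpha> i)"
      by (simp add: vector_smult_lneg sum_negf) (metis minus_minus)
    then show ?thesis using SP_comb[of "\<lambda>i. - of_nat (k (\<alpha> i))"] by (simp add: vector_smult_lneg)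
  qed
qed

lemma SP_add: "SP x \<Longrightarrow> SP y \<Longrightarrow> SP (x + y)"
  unfolding SP_def by (simp add: coef_add vector_sadd_rdistrib sum.distrib)
lemma SP_scale: assumes "SP x" shows "SP (c *s x)"
proof -
  have "c *s x = c *s (\<Sum>i\<in>UNIV. coef i x *s \<alpha> i)" using assms unfolding SP_def by simp
  also have "\<dots> = (\<Sum>i\<in>UNIV. (c * coef i x) *s \<alpha> i)"
    by (simp add: scalar_mult_eq_scaleR[symmetric] vector_smult_assoc sum_distrib_left vec_eq_iff sum_component mult.assoc)
  finally show ?thesis using SP_comb by metis
qed
lemma SP_sum: "(\<And>j. j \<in> A \<Longrightarrow> SP (f j)) \<Longrightarrow> SP (\<Sum>j\<in>A. f j)"
proof (induction A rule: infinite_finite_induct)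
  case (infinite A) then show ?case using SP_comb[of "\<lambda>_. 0"] by simp
next
  case empty then show ?case using SP_comb[of "\<lambda>_. 0"] by simp
next
  case (insert x F) then show ?case by (simp add: SP_add)
qed

lemma expand: "x = (\<Sum>i\<in>UNIV. coef i x *s \<alpha> i)"
proof -
  obtain c where x: "x = (\<Sum>\<beta>\<in>R. c \<beta> *s \<beta>)" using rs unfolding root_system_def by blast
  have "SP x" unfolding x by (rule SP_sum) (rule SP_scale, rule SP_root, simp)
  then show ?thesis unfolding SP_def .
qed

lemma vec_eq_coef: "x = y \<longleftrightarrow> (\<forall>i. coef i x = coef i y)"
proof
  assume "\<forall>i. coef i x = coef i y"
  then have "(\<Sum>i\<in>UNIV. coef i x *s \<alpha> i) = (\<Sum>i\<in>UNIV. coef i y *s \<alpha> i)" by simp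
  then show "x = y" using expand[of x] expand[of y] by simp
qed simp

lemma coef_nonzero: "x \<noteq> 0 \<Longrightarrow> \<exists>i. coef i x \<noteq> 0"
  using vec_eq_coef[of x 0] by auto

end


context RSB begin

definition pos :: "complex^'n \<Rightarrow> bool" where
  "pos x \<longleftrightarrow> (\<forall>i. coef i x \<in> \<nat>)"

definition supp :: "(complex^'n) set \<Rightarrow> complex^'n \<Rightarrow> bool" where
  "supp S x \<longleftrightarrow> (\<forall>i. \<alpha> i \<notin> S \<longrightarrow> coef i x = 0)"

lemma comb_sub: assumes "S \<subseteq> range \<alpha>"
  shows "(\<Sum>\<gamma>\<in>S. f \<gamma> *s \<gamma>) = (\<Sum>i\<in>UNIV. (if \<alpha> i \<in> S then f (\<alpha> i) else 0) *s \<alpha> i)"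
proof -
  have S: "S = \<alpha> ` {i. \<alpha> i \<in> S}" using assms by auto
  have "(\<Sum>\<gamma>\<in>S. f \<gamma> *s \<gamma>) = (\<Sum>i\<in>{i. \<alpha> i \<in> S}. f (\<alpha> i) *s \<alpha> i)"
    by (subst S, subst sum.reindex) (auto intro: inj_on_subset[OF inj_alpha])
  also have "\<dots> = (\<Sum>i\<in>UNIV. (if \<alpha> i \<in> S then f (\<alpha> i) else 0) *s \<alpha> i)"
    by (rule sum.mono_neutral_cong_left) auto
  finally show ?thesis .
qed

lemma nonneg_comb_iff: assumes "S \<subseteq> range \<alpha>"
  shows "nonneg_comb S x \<longleftrightarrow> pos x \<and> supp S x"
proof
  assume "nonneg_comb S x"
  then obtain k where x: "x = (\<Sum>\<gamma>\<in>S. of_nat (k \<gamma>) *s \<gamma>)" unfolding nonneg_comb_def by blast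
  have c: "coef i x = (if \<alpha> i \<in> S then of_nat (k (\<alpha> i)) else 0)" for i
    unfolding x comb_sub[OF assms] coef_comb ..
  show "pos x \<and> supp S x" unfolding pos_def supp_def c by auto
next
  assume h: "pos x \<and> supp S x"
  define k where "k \<gamma> = nat \<lfloor>Re (coef (inv \<alpha> \<gamma>) x)\<rfloor>" for \<gamma>
  have kk: "of_nat (k (\<alpha> i)) = coef i x" for i
  proof -
    have "inv \<alpha> (\<alpha> i) = i" using inj_alpha by simp
    moreover obtain m where "coef i x = of_nat m" using h unfolding pos_def by (metis Nats_cases)
    ultimately show ?thesis unfolding k_def by simp
  qed
  have "x = (\<Sum>i\<in>UNIV. coef i x *s \<alpha> i)" by (rule expand)
  also have "\<dots> = (\<Sum>i\<in>UNIV. (if \<alpha> i \<in> S then of_nat (k (\<alpha> i)) else 0) *s \<alpha> i)"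
    using h kk unfolding supp_def by (intro sum.cong) auto
  also have "\<dots> = (\<Sum>\<gamma>\<in>S. of_nat (k \<gamma>) *s \<gamma>)" using comb_sub[OF assms] by simp
  finally show "nonneg_comb S x" unfolding nonneg_comb_def by blast
qed

lemma pos_nonneg: "nonneg_comb (range \<alpha>) x \<longleftrightarrow> pos x"
  using nonneg_comb_iff[of "range \<alpha>" x] unfolding supp_def by auto

lemma root_pos_neg: "\<beta> \<in> R \<Longrightarrow> pos \<beta> \<or> pos (- \<beta>)"
  using root_sign pos_nonneg by blast

lemma pos_roots_eq: "pos_roots R \<alpha> = {\<beta>\<in>R. pos \<beta>}"
  unfolding pos_roots_def pos_nonneg ..

lemma pos_neg_zero: "pos x \<Longrightarrow> pos (- x) \<Longrightarrow> x = 0"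
proof -
  assume a: "pos x" "pos (- x)"
  have "coef i x = 0" for i
  proof -
    obtain m where m: "coef i x = of_nat m" using a(1) unfolding pos_def by (metis Nats_cases)
    obtain m' where m': "- coef i x = of_nat m'" using a(2) unfolding pos_def coef_minus by (metis Nats_cases)
    have "of_nat m + of_nat m' = (0::complex)" by (simp add: m'[symmetric] m[symmetric])
    then have "of_nat (m + m') = (0::complex)" by simp
    then have "m = 0" by (metis add_is_0 of_nat_eq_0_iff)
    then show ?thesis using m by simp
  qed
  then show ?thesis using vec_eq_coef[of x 0] by simp
qed

lemma root_not_both: "\<beta> \<in> R \<Longrightarrow> pos \<beta> \<Longrightarrow> \<not> pos (- \<beta>)"
  using pos_neg_zero zero_notin by blast

lemma pos_add: "pos x \<Longrightarrow> pos y \<Longrightarrow> pos (x + y)"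
  unfolding pos_def coef_add using Nats_add by blast

lemma pos_alpha: "pos (\<alpha> i)" unfolding pos_def coef_alpha by auto

lemma coef_root_int: assumes "\<beta> \<in> R" shows "coef i \<beta> \<in> \<int>"
  using root_pos_neg[OF assms] unfolding pos_def coef_minus
  by (metis Ints_minus Ints_of_nat Nats_cases minus_minus)

lemma pos_zero: "pos 0" unfolding pos_def by simp
lemma pos_sum: "(\<And>j. j \<in> A \<Longrightarrow> pos (f j)) \<Longrightarrow> pos (\<Sum>j\<in>A. f j)"
  by (induction A rule: infinite_finite_induct) (auto simp: pos_zero pos_add)

lemma pos_scale_nat: "pos x \<Longrightarrow> c \<in> \<nat> \<Longrightarrow> pos (c *s x)"
  unfolding pos_def coef_scale using Nats_mult by blast

end


definition rv :: "complex^'n \<Rightarrow> real^'n" where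
  "rv x = (\<chi> i. Re (x$i))"

lemma bil_rv: "realv x \<Longrightarrow> realv y \<Longrightarrow> bil x y = of_real (inner (rv x) (rv y))"
  unfolding bil_real inner_vec_def rv_def by simp

lemma realv_diff: "realv x \<Longrightarrow> realv y \<Longrightarrow> realv (x - y)" unfolding realv_def by simp
lemma realv_add: "realv x \<Longrightarrow> realv y \<Longrightarrow> realv (x + y)" unfolding realv_def by simp

lemma CS_bil: assumes "realv x" "realv y"
  shows "(Re (bil x y))\<^sup>2 \<le> Re (bil x x) * Re (bil y y)"
  using Cauchy_Schwarz_ineq[of "rv x" "rv y"] bil_rv[OF assms] bil_rv[OF assms(1) assms(1)]
     bil_rv[OF assms(2) assms(2)] by simp

lemma Nats_neg_zero: assumes "(c::complex) \<in> \<nat>" "- c \<in> \<nat>" shows "c = 0"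
proof -
  obtain m where m: "c = of_nat m" using assms(1) by (metis Nats_cases)
  obtain m' where m': "- c = of_nat m'" using assms(2) by (metis Nats_cases)
  have "of_nat m + of_nat m' = (0::complex)" by (simp add: m'[symmetric] m[symmetric])
  then have "of_nat (m + m') = (0::complex)" by simp
  then have "m = 0" by (metis add_is_0 of_nat_eq_0_iff)
  then show ?thesis using m by simp
qed

context RSB begin

lemma weylR: "w \<in> weyl_group R \<Longrightarrow> \<beta> \<in> R \<Longrightarrow> w \<beta> \<in> R"
  using weyl_pres[of w R \<beta>] reflR by blast

lemma bil_root_real: "\<beta> \<in> R \<Longrightarrow> \<gamma> \<in> R \<Longrightarrow> bil \<beta> \<gamma> = of_real (Re (bil \<beta> \<gamma>))"
  using bil_rv[OF realR realR] by (metis Re_complex_of_real)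

lemma root_self_pos: "\<beta> \<in> R \<Longrightarrow> Re (bil \<beta> \<beta>) > 0"
  using bil_self_pos(1)[OF realR] zero_notin by blast

lemma root_string: assumes b: "\<beta> \<in> R" and g: "\<gamma> \<in> R" and ne: "\<gamma> \<noteq> \<beta>" "\<gamma> \<noteq> - \<beta>"
  and p: "Re (bil \<beta> \<gamma>) > 0"
  shows "\<beta> - \<gamma> \<in> R"
proof -
  define pp where "pp = Re (bil \<beta> \<gamma>)"
  define a where "a = Re (bil \<beta> \<beta>)"
  define c where "c = Re (bil \<gamma> \<gamma>)"
  have a0: "a > 0" "c > 0" using root_self_pos b g a_def c_def by auto
  have e1: "bil \<beta> \<gamma> = of_real pp" "bil \<gamma> \<beta> = of_real pp" "bil \<beta> \<beta> = of_real a" "bil \<gamma> \<gamma> = of_real c"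
    using bil_root_real[OF b g] bil_root_real[OF g b] bil_root_real[OF b b] bil_root_real[OF g g]
    unfolding pp_def a_def c_def bil_sym[of \<gamma> \<beta>] by auto
  obtain k1 where k1: "bil (coroot \<gamma>) \<beta> = of_int k1" using intR[OF g b] by (metis Ints_cases)
  obtain k2 where k2: "bil (coroot \<beta>) \<gamma> = of_int k2" using intR[OF b g] by (metis Ints_cases)
  have "of_int k1 = (of_real (2 * pp / c) :: complex)" using k1 unfolding reflect_bil e1 by simp
  then have r1: "real_of_int k1 = 2 * pp / c" by (metis of_real_eq_iff of_real_of_int_eq)
  have "of_int k2 = (of_real (2 * pp / a) :: complex)" using k2 unfolding reflect_bil e1 by simp
  then have r2: "real_of_int k2 = 2 * pp / a" by (metis of_real_eq_iff of_real_of_int_eq)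
  have "pp\<^sup>2 \<le> a * c" using CS_bil[OF realR[OF b] realR[OF g]] pp_def a_def c_def by simp
  then have "real_of_int k1 * real_of_int k2 \<le> 4"
    unfolding r1 r2 using a0 by (simp add: field_simps power2_eq_square)
  then have prod: "k1 * k2 \<le> 4" by (metis of_int_le_iff of_int_mult of_int_numeral)
  have "real_of_int k1 > 0" "real_of_int k2 > 0" unfolding r1 r2 using p a0 pp_def by auto
  then have pos1: "k1 \<ge> 1" "k2 \<ge> 1" by auto
  have "k1 = 1 \<or> k2 = 1"
  proof (rule ccontr)
    assume "\<not> (k1 = 1 \<or> k2 = 1)"
    then have "k1 \<ge> 2" "k2 \<ge> 2" using pos1 by auto
    moreover have "k1 * 2 \<le> k1 * k2" "2 * k2 \<le> k1 * k2"
      using \<open>k1 \<ge> 2\<close> \<open>k2 \<ge> 2\<close> by (auto intro: mult_left_mono mult_right_mono)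
    ultimately have "k1 = 2" "k2 = 2" using prod by linarith+
    then have "pp = c" "pp = a" using r1 r2 a0 by (auto simp: field_simps)
    then have "bil (\<beta> - \<gamma>) (\<beta> - \<gamma>) = 0"
      using e1 by (simp add: bil_diff_left bil_diff_right)
    moreover have "\<beta> - \<gamma> \<noteq> 0" using ne by simp
    ultimately show False using bil_self_pos(3)[OF realv_diff[OF realR[OF b] realR[OF g]]] by blast
  qed
  then show ?thesis
  proof
    assume "k1 = 1"
    then have "reflect \<gamma> \<beta> = \<beta> - \<gamma>" unfolding reflect_def k1 by simp
    then show ?thesis using reflR[OF g b] by simp
  next
    assume "k2 = 1"
    then have "reflect \<beta> \<gamma> = \<gamma> - \<beta>" unfolding reflect_def k2 by simp
    then show ?thesis using minusR[OF reflR[OF b g]] by simp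
  qed
qed

lemma reduced_mult: "\<beta> \<in> R \<Longrightarrow> c *s \<beta> \<in> R \<Longrightarrow> c = 1 \<or> c = -1"
  using red unfolding reduced_rs_def by blast

lemma pos_of_coef: assumes "\<beta> \<in> R" "coef j \<beta> \<in> \<nat>" "coef j \<beta> \<noteq> 0" shows "pos \<beta>"
proof (rule ccontr)
  assume "\<not> pos \<beta>"
  then have "pos (- \<beta>)" using root_pos_neg[OF assms(1)] by blast
  then have "- coef j \<beta> \<in> \<nat>" unfolding pos_def coef_minus by blast
  with assms(2,3) show False using Nats_neg_zero by blast
qed

lemma neg_of_coef: assumes "\<beta> \<in> R" "- coef j \<beta> \<in> \<nat>" "coef j \<beta> \<noteq> 0" shows "pos (- \<beta>)"
  using pos_of_coef[OF minusR[OF assms(1)], of j] assms unfolding coef_minus by simp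

lemma root_other_coef: assumes "\<beta> \<in> R" "\<beta> \<noteq> \<alpha> i" "\<beta> \<noteq> - \<alpha> i"
  shows "\<exists>j. j \<noteq> i \<and> coef j \<beta> \<noteq> 0"
proof (rule ccontr)
  assume "\<not> ?thesis"
  then have "\<beta> = coef i \<beta> *s \<alpha> i"
    unfolding vec_eq_coef[of \<beta>] by (auto simp: coef_scale coef_alpha)
  then have "coef i \<beta> = 1 \<or> coef i \<beta> = -1" using reduced_mult[OF alphaR[of i], of "coef i \<beta>"] assms(1) by simp
  then show False using assms \<open>\<beta> = _\<close> by (auto simp: vector_smult_lneg)
qed

lemma simple_refl_pos: assumes "\<beta> \<in> R" "pos \<beta>" "\<beta> \<noteq> \<alpha> i"
  shows "pos (reflect (\<alpha> i) \<beta>)"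
proof -
  have "\<beta> \<noteq> - \<alpha> i" using assms root_not_both[OF alphaR pos_alpha] by auto
  then obtain j where j: "j \<noteq> i" "coef j \<beta> \<noteq> 0" using root_other_coef assms by blast
  have "coef j (reflect (\<alpha> i) \<beta>) = coef j \<beta>" using j
    unfolding reflect_def by (simp add: coef_diff coef_scale coef_alpha)
  then show ?thesis using pos_of_coef[OF reflR[OF alphaR assms(1)], of j] assms(2) j
    unfolding pos_def by simp
qed

lemma simple_refl_neg: assumes "\<beta> \<in> R" "pos (- \<beta>)" "\<beta> \<noteq> - \<alpha> i"
  shows "pos (- reflect (\<alpha> i) \<beta>)"
proof -
  have "- \<beta> \<noteq> \<alpha> i" using assms by (metis minus_minus)
  then show ?thesis using simple_refl_pos[OF minusR[OF assms(1)] assms(2)] reflect_minus by metis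
qed

lemma simple_bil_nonpos: assumes "i \<noteq> j" shows "Re (bil (\<alpha> i) (\<alpha> j)) \<le> 0"
proof (rule ccontr)
  assume "\<not> ?thesis"
  moreover have "\<alpha> j \<noteq> \<alpha> i" using inj_alpha assms by (metis injD)
  moreover have "\<alpha> j \<noteq> - \<alpha> i" using root_not_both[OF alphaR pos_alpha] pos_alpha by metis
  ultimately have "\<alpha> i - \<alpha> j \<in> R" using root_string[OF alphaR alphaR] by simp
  moreover have "coef i (\<alpha> i - \<alpha> j) = 1" "coef j (\<alpha> i - \<alpha> j) = -1"
    using assms by (auto simp: coef_diff coef_alpha)
  moreover have m1: "(-1::complex) \<notin> \<nat>" using Nats_neg_zero[of 1] by auto
  ultimately show False using root_pos_neg[of "\<alpha> i - \<alpha> j"] unfolding pos_def coef_minus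
    by (metis minus_minus)
qed

end


context RSB begin

definition natc :: "'n \<Rightarrow> complex^'n \<Rightarrow> nat" where
  "natc i x = nat \<lfloor>Re (coef i x)\<rfloor>"

definition ht :: "complex^'n \<Rightarrow> nat" where
  "ht x = (\<Sum>i\<in>UNIV. natc i x)"

lemma pos_coef: "pos x \<Longrightarrow> coef i x = of_nat (natc i x)"
proof -
  assume "pos x"
  then obtain m where "coef i x = of_nat m" unfolding pos_def by (metis Nats_cases)
  then show ?thesis unfolding natc_def by simp
qed

lemma supp_orth: assumes "supp A x" "\<forall>a\<in>A. bil a c = 0" shows "bil x c = 0"
proof -
  have "bil x c = (\<Sum>i\<in>UNIV. coef i x * bil (\<alpha> i) c)"
    by (subst expand[of x]) (simp add: bil_sum_left bil_scale_left)
  also have "\<dots> = 0" using assms unfolding supp_def by (intro sum.neutral) auto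
  finally show ?thesis .
qed

lemma supp_minus: "supp A (- x) \<longleftrightarrow> supp A x" unfolding supp_def coef_minus by simp

lemma supp_alpha: "supp A (\<alpha> i) \<longleftrightarrow> \<alpha> i \<in> A" unfolding supp_def coef_alpha by auto

lemma pos_decomp: assumes b: "\<beta> \<in> R" "pos \<beta>" "\<beta> \<notin> range \<alpha>"
  shows "\<exists>i. \<beta> - \<alpha> i \<in> R \<and> pos (\<beta> - \<alpha> i) \<and> coef i \<beta> \<noteq> 0"
proof -
  have "bil \<beta> \<beta> = (\<Sum>i\<in>UNIV. coef i \<beta> * bil (\<alpha> i) \<beta>)"
    by (subst (1) expand[of \<beta>]) (simp add: bil_sum_left bil_scale_left)
  then have s1: "Re (bil \<beta> \<beta>) = (\<Sum>i\<in>UNIV. real (natc i \<beta>) * Re (bil (\<alpha> i) \<beta>))"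
    using pos_coef[OF b(2)] by simp
  have s2: "Re (bil \<beta> \<beta>) > 0" using root_self_pos b by simp
  obtain i where i: "real (natc i \<beta>) * Re (bil (\<alpha> i) \<beta>) > 0"
  proof -
    have "\<not> (\<forall>i. real (natc i \<beta>) * Re (bil (\<alpha> i) \<beta>) \<le> 0)"
    proof
      assume "\<forall>i. real (natc i \<beta>) * Re (bil (\<alpha> i) \<beta>) \<le> 0"
      then have "(\<Sum>i\<in>UNIV. real (natc i \<beta>) * Re (bil (\<alpha> i) \<beta>)) \<le> 0" by (intro sum_nonpos) auto
      then show False using s1 s2 by linarith
    qed
    then show ?thesis using that by (auto simp: not_le)
  qed
  then have c: "natc i \<beta> \<ge> 1" "Re (bil \<beta> (\<alpha> i)) > 0"
    by (auto simp: bil_sym zero_less_mult_iff)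
  have ne: "\<alpha> i \<noteq> \<beta>" using b by auto
  have ne2: "\<alpha> i \<noteq> - \<beta>" using root_not_both[OF b(1) b(2)] pos_alpha by (metis)
  have r: "\<beta> - \<alpha> i \<in> R" using root_string[OF b(1) alphaR ne ne2 c(2)] .
  have "pos (\<beta> - \<alpha> i)" unfolding pos_def
  proof
    fix j
    show "coef j (\<beta> - \<alpha> i) \<in> \<nat>"
    proof (cases "j = i")
      case True
      then have "coef j (\<beta> - \<alpha> i) = of_nat (natc i \<beta> - 1)"
        using c pos_coef[OF b(2), of i] by (simp add: coef_diff coef_alpha of_nat_diff)
      then show ?thesis by simp
    next
      case False
      then show ?thesis using b(2) unfolding pos_def by (simp add: coef_diff coef_alpha)
    qed
  qed
  moreover have "coef i \<beta> \<noteq> 0" using c pos_coef[OF b(2), of i] by simp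
  ultimately show ?thesis using r by blast
qed

lemma nat_shift: "(of_nat m' :: complex) = of_nat m - 1 \<Longrightarrow> m = Suc m'"
proof -
  assume "(of_nat m' :: complex) = of_nat m - 1"
  then have "(of_nat (Suc m') :: complex) = of_nat m" by (simp add: algebra_simps)
  then show ?thesis by (simp only: of_nat_eq_iff)
qed

lemma ht_decr: assumes "pos \<beta>" "pos (\<beta> - \<alpha> i)" shows "ht (\<beta> - \<alpha> i) < ht \<beta>"
proof -
  have a: "natc j (\<beta> - \<alpha> i) \<le> natc j \<beta>" for j
  proof (cases "j = i")
    case True
    then have "(of_nat (natc j (\<beta> - \<alpha> i)) :: complex) = of_nat (natc j \<beta>) - 1"
      using pos_coef[OF assms(1), of j] pos_coef[OF assms(2), of j] by (simp add: coef_diff coef_alpha)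
    then show ?thesis using nat_shift by fastforce
  next
    case False
    then have "(of_nat (natc j (\<beta> - \<alpha> i)) :: complex) = of_nat (natc j \<beta>)"
      using pos_coef[OF assms(1), of j] pos_coef[OF assms(2), of j] by (simp add: coef_diff coef_alpha)
    then show ?thesis by (simp only: of_nat_eq_iff)
  qed
  have "(of_nat (natc i (\<beta> - \<alpha> i)) :: complex) = of_nat (natc i \<beta>) - 1"
    using pos_coef[OF assms(1), of i] pos_coef[OF assms(2), of i] by (simp add: coef_diff coef_alpha)
  then have b: "natc i (\<beta> - \<alpha> i) < natc i \<beta>" using nat_shift by fastforce
  show ?thesis unfolding ht_def using a b by (intro sum_strict_mono_ex1) auto
qed

lemma split_step: assumes orth: "\<forall>a\<in>X. \<forall>c\<in>Y. bil a c = 0" and disj: "X \<inter> Y = {}"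
  and b': "\<beta>' \<in> R" "supp X \<beta>'" "pos \<beta>'" and i: "\<alpha> i \<in> Y" and bb: "\<beta>' + \<alpha> i \<in> R"
  shows False
proof -
  have o1: "bil \<beta>' (\<alpha> i) = 0" using supp_orth[OF b'(2)] orth i by blast
  have ai: "bil (\<alpha> i) (\<alpha> i) \<noteq> 0" using bilRR alphaR by blast
  have "bil (coroot (\<alpha> i)) (\<beta>' + \<alpha> i) = 2"
    unfolding reflect_bil using o1 ai by (simp add: bil_add_right bil_sym[of "\<alpha> i" \<beta>'])
  then have "reflect (\<alpha> i) (\<beta>' + \<alpha> i) = \<beta>' - \<alpha> i"
    unfolding reflect_def by (simp add: vec_eq_iff)
  then have r: "\<beta>' - \<alpha> i \<in> R" using reflR[OF alphaR[of i] bb] by simp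
  obtain j where j: "coef j \<beta>' \<noteq> 0" using coef_nonzero zero_notin b'(1) by metis
  have "\<alpha> j \<in> X" using j b'(2) unfolding supp_def by blast
  then have ji: "j \<noteq> i" using i disj by auto
  have ci: "coef i \<beta>' = 0" using b'(2) i disj unfolding supp_def by auto
  have cj: "coef j (\<beta>' - \<alpha> i) = coef j \<beta>'" "coef i (\<beta>' - \<alpha> i) = -1"
    using ji ci by (auto simp: coef_diff coef_alpha)
  have m1: "(-1::complex) \<notin> \<nat>" using Nats_neg_zero[of 1] by auto
  consider "pos (\<beta>' - \<alpha> i)" | "pos (- (\<beta>' - \<alpha> i))" using root_pos_neg[OF r] by blast
  then show False
  proof cases
    case 1 then show False using cj m1 unfolding pos_def by metis
  next
    case 2
    then have "- coef j \<beta>' \<in> \<nat>" using cj unfolding pos_def coef_minus by metis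
    moreover have "coef j \<beta>' \<in> \<nat>" using b'(3) unfolding pos_def by blast
    ultimately show False using Nats_neg_zero j by blast
  qed
qed

lemma supp_shift: assumes "supp X \<beta>'" "\<alpha> i \<in> X" shows "supp X (\<beta>' + \<alpha> i)"
  using assms unfolding supp_def by (auto simp: coef_add coef_alpha)

lemma split_pos: assumes AB: "A \<inter> B = {}" and orth: "\<forall>a\<in>A. \<forall>c\<in>B. bil a c = 0"
  shows "\<beta> \<in> R \<Longrightarrow> pos \<beta> \<Longrightarrow> supp (A \<union> B) \<beta> \<Longrightarrow> supp A \<beta> \<or> supp B \<beta>"
proof (induction "ht \<beta>" arbitrary: \<beta> rule: less_induct)
  case less
  show ?case
  proof (cases "\<beta> \<in> range \<alpha>")
    case True
    then obtain i where i: "\<beta> = \<alpha> i" by blast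
    then have "\<alpha> i \<in> A \<union> B" using less.prems(3) unfolding supp_def by (force simp: coef_alpha)
    then show ?thesis using i supp_alpha by auto
  next
    case False
    obtain i where i: "\<beta> - \<alpha> i \<in> R" "pos (\<beta> - \<alpha> i)" "coef i \<beta> \<noteq> 0"
      using pos_decomp[OF less.prems(1,2) False] by blast
    have ai: "\<alpha> i \<in> A \<union> B" using i(3) less.prems(3) unfolding supp_def by blast
    have s': "supp (A \<union> B) (\<beta> - \<alpha> i)" using less.prems(3) ai unfolding supp_def
      by (auto simp: coef_diff coef_alpha)
    have "supp A (\<beta> - \<alpha> i) \<or> supp B (\<beta> - \<alpha> i)"
      using less.hyps[OF ht_decr[OF less.prems(2) i(2)] i(1) i(2) s'] .
    moreover have bb: "(\<beta> - \<alpha> i) + \<alpha> i \<in> R" using less.prems(1) by simp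
    have orth': "\<forall>a\<in>B. \<forall>c\<in>A. bil a c = 0" using orth bil_sym by metis
    have AB': "B \<inter> A = {}" using AB by blast
    ultimately show ?thesis
    proof (elim disjE)
      assume sA: "supp A (\<beta> - \<alpha> i)"
      show ?thesis
      proof (cases "\<alpha> i \<in> A")
        case True then show ?thesis using supp_shift[OF sA] by fastforce
      next
        case False
        then have "\<alpha> i \<in> B" using ai by blast
        then show ?thesis using split_step[OF orth AB i(1) sA i(2) _ bb] by blast
      qed
    next
      assume sB: "supp B (\<beta> - \<alpha> i)"
      show ?thesis
      proof (cases "\<alpha> i \<in> B")
        case True then show ?thesis using supp_shift[OF sB] by fastforce
      next
        case False
        then have "\<alpha> i \<in> A" using ai by blast
        then show ?thesis using split_step[OF orth' AB' i(1) sB i(2) _ bb] by blast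
      qed
    qed
  qed
qed

lemma split_root: assumes AB: "A \<inter> B = {}" and orth: "\<forall>a\<in>A. \<forall>c\<in>B. bil a c = 0"
  and b: "\<beta> \<in> R" "supp (A \<union> B) \<beta>" shows "supp A \<beta> \<or> supp B \<beta>"
proof -
  consider "pos \<beta>" | "pos (- \<beta>)" using root_pos_neg[OF b(1)] by blast
  then show ?thesis
  proof cases
    case 1 then show ?thesis using split_pos[OF AB orth b(1) _ b(2)] by blast
  next
    case 2 then show ?thesis using split_pos[OF AB orth minusR[OF b(1)] _] b(2) supp_minus by metis
  qed
qed

end


locale RSB0 = RSB R \<alpha> b for R :: "(complex^'n) set" and \<alpha> b +
  fixes S0 :: "(complex^'n) set"
  assumes S0_sub: "S0 \<subseteq> range \<alpha>"
begin

lemma S0R: "S0 \<subseteq> R" using S0_sub alphaR by blast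

lemma R0_iff: "\<beta> \<in> R0 R S0 \<longleftrightarrow> \<beta> \<in> R \<and> supp S0 \<beta>"
proof
  assume "\<beta> \<in> R0 R S0"
  then obtain c where b: "\<beta> \<in> R" "\<beta> = (\<Sum>\<gamma>\<in>S0. c \<gamma> *s \<gamma>)" unfolding R0_def by blast
  have "coef i \<beta> = (if \<alpha> i \<in> S0 then c (\<alpha> i) else 0)" for i
    unfolding b(2) comb_sub[OF S0_sub] coef_comb ..
  then show "\<beta> \<in> R \<and> supp S0 \<beta>" using b unfolding supp_def by auto
next
  assume h: "\<beta> \<in> R \<and> supp S0 \<beta>"
  have "\<beta> = (\<Sum>i\<in>UNIV. coef i \<beta> *s \<alpha> i)" by (rule expand)
  also have "\<dots> = (\<Sum>i\<in>UNIV. (if \<alpha> i \<in> S0 then coef (inv \<alpha> (\<alpha> i)) \<beta> else 0) *s \<alpha> i)"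
    using h inj_alpha unfolding supp_def by (intro sum.cong) auto
  also have "\<dots> = (\<Sum>\<gamma>\<in>S0. coef (inv \<alpha> \<gamma>) \<beta> *s \<gamma>)" using comb_sub[OF S0_sub] by simp
  finally have eq: "\<beta> = (\<Sum>\<gamma>\<in>S0. coef (inv \<alpha> \<gamma>) \<beta> *s \<gamma>)" .
  show "\<beta> \<in> R0 R S0" using h eq unfolding R0_def
    by (intro CollectI conjI exI[of _ "\<lambda>\<gamma>. coef (inv \<alpha> \<gamma>) \<beta>"]) auto
qed

abbreviation "Rz \<equiv> R0 R S0"
definition rel :: "((complex^'n) \<times> (complex^'n)) set" where
  "rel = {(x, y). x \<in> Rz \<and> y \<in> Rz \<and> bil x y \<noteq> 0}"

lemma comps_def': "rs_components Rz = {{\<beta>\<in>Rz. (a, \<beta>) \<in> rel\<^sup>*} | a. a \<in> Rz}"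
  unfolding rs_components_def rel_def ..

lemma rel_sym: "(x, y) \<in> rel \<Longrightarrow> (y, x) \<in> rel" unfolding rel_def by simp (metis bil_sym)

lemma rtrancl_rel_sym: "(x, y) \<in> rel\<^sup>* \<Longrightarrow> (y, x) \<in> rel\<^sup>*"
proof (induction rule: rtrancl_induct)
  case base then show ?case by simp
next
  case (step y z) then show ?case using rel_sym by (meson converse_rtrancl_into_rtrancl)
qed

lemma S0_supp: "\<gamma> \<in> S0 \<Longrightarrow> supp S0 \<gamma>"
  using S0_sub supp_alpha by blast

lemma S0_Rz: "\<gamma> \<in> S0 \<Longrightarrow> \<gamma> \<in> Rz"
  using R0_iff S0R S0_supp by blast

lemma root_has_simple: assumes "\<beta> \<in> R" "supp S \<beta>" "S \<subseteq> range \<alpha>"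
  shows "\<exists>a\<in>S. bil \<beta> a \<noteq> 0"
proof (rule ccontr)
  assume "\<not> ?thesis"
  then have "\<forall>a\<in>S. bil a \<beta> = 0" using bil_sym by metis
  then have "bil \<beta> \<beta> = 0" using supp_orth[OF assms(2)] by blast
  then show False using bilRR assms(1) by blast
qed

context
  fixes C assumes C: "C \<in> rs_components Rz"
begin

definition "SC = S0 \<inter> C"

lemma C_obtain: obtains a where "a \<in> Rz" "C = {\<beta>\<in>Rz. (a, \<beta>) \<in> rel\<^sup>*}"
  using C unfolding comps_def' by blast

lemma C_sub: "C \<subseteq> Rz" using C_obtain by blast

lemma C_nonempty: "C \<noteq> {}" using C_obtain by blast

lemma C_closed: assumes "\<beta> \<in> C" "\<gamma> \<in> Rz" "bil \<beta> \<gamma> \<noteq> 0" shows "\<gamma> \<in> C"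
proof -
  obtain a where a: "a \<in> Rz" "C = {\<beta>\<in>Rz. (a, \<beta>) \<in> rel\<^sup>*}" using C_obtain by blast
  have "(\<beta>, \<gamma>) \<in> rel" using assms C_sub unfolding rel_def by auto
  then show ?thesis using assms a by (auto intro: rtrancl_into_rtrancl)
qed

lemma SC_sub: "SC \<subseteq> range \<alpha>" "SC \<subseteq> S0" "SC \<subseteq> C" unfolding SC_def using S0_sub by auto

lemma SC_orth: "\<forall>a\<in>SC. \<forall>c\<in>S0 - SC. bil a c = 0"
  using C_closed S0_Rz unfolding SC_def by blast

lemma C_supp: assumes "\<beta> \<in> C" shows "supp SC \<beta>"
proof -
  have b: "\<beta> \<in> R" "supp S0 \<beta>" using assms C_sub R0_iff by auto
  have "S0 = SC \<union> (S0 - SC)" using SC_sub by blast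
  then have "supp SC \<beta> \<or> supp (S0 - SC) \<beta>"
    using split_root[OF _ SC_orth b(1)] b(2) by (metis Diff_disjoint)
  moreover have "\<not> supp (S0 - SC) \<beta>"
  proof
    assume s: "supp (S0 - SC) \<beta>"
    obtain a where a: "a \<in> S0" "bil \<beta> a \<noteq> 0" using root_has_simple[OF b S0_sub] by blast
    then have "a \<in> C" using C_closed[OF assms S0_Rz] by blast
    then have "a \<in> SC" using a unfolding SC_def by blast
    moreover have "\<forall>x\<in>S0 - SC. bil x a = 0" using SC_orth bil_sym \<open>a \<in> SC\<close> by metis
    ultimately show False using supp_orth[OF s] a(2) by blast
  qed
  ultimately show ?thesis by blast
qed

lemma C_iff: "\<beta> \<in> C \<longleftrightarrow> \<beta> \<in> R \<and> supp SC \<beta>"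
proof
  assume "\<beta> \<in> C" then show "\<beta> \<in> R \<and> supp SC \<beta>" using C_supp C_sub R0_iff by blast
next
  assume h: "\<beta> \<in> R \<and> supp SC \<beta>"
  then have s0: "supp S0 \<beta>" using SC_sub unfolding supp_def by blast
  obtain a where a: "a \<in> SC" "bil \<beta> a \<noteq> 0" using root_has_simple[OF _ _ SC_sub(1)] h by blast
  have "a \<in> C" using a SC_sub by blast
  have "bil a \<beta> \<noteq> 0" using a bil_sym by metis
  then show "\<beta> \<in> C" using C_closed[OF \<open>a \<in> C\<close>] h s0 R0_iff by blast
qed

lemma SC_nonempty: "SC \<noteq> {}"
proof -
  obtain \<beta> where "\<beta> \<in> C" using C_nonempty by blast
  then show ?thesis using root_has_simple[OF _ _ SC_sub(1)] C_iff by blast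
qed

lemma C_minus: "\<beta> \<in> C \<Longrightarrow> - \<beta> \<in> C" using C_iff minusR supp_minus by blast

lemma comp_side: assumes A: "A \<subseteq> SC" "A \<noteq> {}" and orth: "\<forall>a\<in>A. \<forall>c\<in>SC - A. bil a c = 0"
  shows "A = SC"
proof (rule ccontr)
  assume ne: "A \<noteq> SC"
  have sides: "supp A \<beta> \<or> supp (SC - A) \<beta>" if "\<beta> \<in> C" for \<beta>
  proof -
    have d: "A \<inter> (SC - A) = {}" by blast
    have u: "A \<union> (SC - A) = SC" using A by blast
    have "\<beta> \<in> R" "supp (A \<union> (SC - A)) \<beta>" using C_iff that u by auto
    then show ?thesis using split_root[OF d orth] by blast
  qed
  have both: False if "supp A \<beta>" "supp (SC - A) \<beta>" "\<beta> \<in> R" for \<beta>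
  proof -
    have "coef i \<beta> = 0" for i
      using that(1,2) A unfolding supp_def by (cases "\<alpha> i \<in> A") auto
    then have "\<beta> = 0" unfolding vec_eq_coef[of \<beta> 0] by simp
    then show False using that(3) zero_notin by blast
  qed
  obtain a0 where a0: "a0 \<in> Rz" "C = {\<beta>\<in>Rz. (a0, \<beta>) \<in> rel\<^sup>*}" using C_obtain by blast
  have a0C: "a0 \<in> C" using a0 by auto
  have inv: "supp A \<beta> \<longleftrightarrow> supp A a0" if "(a0, \<beta>) \<in> rel\<^sup>*" for \<beta>
    using that
  proof (induction rule: rtrancl_induct)
    case base then show ?case by simp
  next
    case (step y z)
    have yC: "y \<in> C" "z \<in> C" using step a0 unfolding rel_def by (auto intro: rtrancl_into_rtrancl)
    have yz: "bil y z \<noteq> 0" using step(2) unfolding rel_def by auto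
    have "supp A y \<longleftrightarrow> supp A z"
    proof
      assume sy: "supp A y"
      show "supp A z"
      proof (rule ccontr)
        assume "\<not> supp A z"
        then have sz: "supp (SC - A) z" using sides yC by blast
        have "\<forall>c\<in>SC - A. bil y c = 0" using supp_orth[OF sy] orth by blast
        then have "bil z y = 0" using supp_orth[OF sz] bil_sym by metis
        then show False using yz bil_sym by metis
      qed
    next
      assume sz: "supp A z"
      show "supp A y"
      proof (rule ccontr)
        assume "\<not> supp A y"
        then have sy: "supp (SC - A) y" using sides yC by blast
        have "\<forall>c\<in>SC - A. bil z c = 0" using supp_orth[OF sz] orth by blast
        then have "bil y z = 0" using supp_orth[OF sy] bil_sym by metis
        then show False using yz by blast
      qed
    qed
    then show ?case using step by blast
  qed
  obtain a where a: "a \<in> A" using A by blast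
  obtain c where c: "c \<in> SC - A" using A ne by blast
  have aC: "a \<in> C" "c \<in> C" using a c A SC_sub by auto
  have "supp A a" using a A SC_sub supp_alpha by blast
  moreover have "supp (SC - A) c" using c SC_sub supp_alpha by blast
  then have "\<not> supp A c" using both[of c] aC C_iff by blast
  ultimately have "\<not> supp A c" "supp A a" by auto
  moreover have "(a0, a) \<in> rel\<^sup>*" "(a0, c) \<in> rel\<^sup>*" using aC a0 by auto
  ultimately show False using inv by blast
qed

end
end


context RSB0 begin

definition fsum :: "complex^'n \<Rightarrow> real" where
  "fsum x = (\<Sum>i\<in>UNIV. Re (coef i x))"

lemma fsum_diff: "fsum (y - x) = fsum y - fsum x"
  unfolding fsum_def by (simp add: coef_diff sum_subtractf)

lemma fsum_pos: assumes "pos x" "x \<noteq> 0" shows "fsum x > 0"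
proof -
  obtain j where j: "coef j x \<noteq> 0" using coef_nonzero assms(2) by blast
  have "Re (coef i x) \<ge> 0" for i using pos_coef[OF assms(1), of i] by simp
  moreover have "Re (coef j x) > 0" using pos_coef[OF assms(1), of j] j by simp
  ultimately show ?thesis unfolding fsum_def
    by (intro sum_pos2[of UNIV j]) auto
qed

context
  fixes C assumes C: "C \<in> rs_components Rz"
begin

definition "maxl \<rho> \<longleftrightarrow> \<rho> \<in> C \<and> (\<forall>\<gamma>\<in>C. pos (\<gamma> - \<rho>) \<longrightarrow> \<gamma> = \<rho>)"

lemma finC: "finite C" using C_sub[OF C] finR R0_iff by (meson finite_subset subsetI)

lemma exists_maxl: assumes "\<beta> \<in> C" shows "\<exists>\<rho>. maxl \<rho> \<and> pos (\<rho> - \<beta>)"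
proof -
  define T where "T = {\<gamma>\<in>C. pos (\<gamma> - \<beta>)}"
  have fT: "finite T" using finC unfolding T_def by simp
  have bT: "\<beta> \<in> T" using assms unfolding T_def by (simp add: pos_zero)
  have ne: "fsum ` T \<noteq> {}" using bT by blast
  obtain \<rho> where r: "\<rho> \<in> T" "fsum \<rho> = Max (fsum ` T)"
    using Max_in[OF finite_imageI[OF fT] ne] by auto
  have mx: "fsum \<gamma> \<le> fsum \<rho>" if "\<gamma> \<in> T" for \<gamma> using r Max_ge[OF finite_imageI[OF fT]] that by auto
  have "maxl \<rho>" unfolding maxl_def
  proof (intro conjI ballI impI)
    show "\<rho> \<in> C" using r unfolding T_def by auto
    fix \<gamma> assume g: "\<gamma> \<in> C" "pos (\<gamma> - \<rho>)"
    have "pos (\<gamma> - \<beta>)" using pos_add[OF g(2), of "\<rho> - \<beta>"] r unfolding T_def by simp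
    then have "\<gamma> \<in> T" using g unfolding T_def by simp
    then have "fsum \<gamma> \<le> fsum \<rho>" using mx by blast
    then show "\<gamma> = \<rho>" using fsum_pos[OF g(2)] fsum_diff by force
  qed
  then show ?thesis using r unfolding T_def by blast
qed

lemma maxl_pos: assumes "maxl \<rho>" shows "pos \<rho>"
proof (rule ccontr)
  assume "\<not> pos \<rho>"
  have rC: "\<rho> \<in> C" using assms maxl_def by blast
  have R: "\<rho> \<in> R" using rC C_iff[OF C] by blast
  have np: "pos (- \<rho>)" using root_pos_neg[OF R] \<open>\<not> pos \<rho>\<close> by blast
  have "- \<rho> \<in> C" using C_minus[OF C rC] .
  moreover have "pos (- \<rho> - \<rho>)" using pos_add[OF np np] by simp
  ultimately have "- \<rho> = \<rho>" using assms unfolding maxl_def by blast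
  then have "\<rho> + \<rho> = 0" by (metis add.left_inverse)
  then have "(1 + 1::complex) *s \<rho> = 0" by (simp only: vector_sadd_rdistrib vector_smult_lid)
  then have "\<rho> = 0" by simp
  then show False using R zero_notin by blast
qed

lemma maxl_dom: assumes m: "maxl \<rho>" and a: "\<alpha> i \<in> SC C" shows "Re (bil \<rho> (\<alpha> i)) \<ge> 0"
proof (rule ccontr)
  assume neg: "\<not> ?thesis"
  have rC: "\<rho> \<in> C" using m maxl_def by blast
  have R: "\<rho> \<in> R" using rC C_iff[OF C] by blast
  obtain k where k: "bil (coroot (\<alpha> i)) \<rho> = of_int k" using intR[OF alphaR R] by (metis Ints_cases)
  define A where "A = Re (bil (\<alpha> i) (\<alpha> i))"
  define P where "P = Re (bil \<rho> (\<alpha> i))"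
  have e1: "bil (\<alpha> i) \<rho> = of_real P" "bil (\<alpha> i) (\<alpha> i) = of_real A"
    using bil_root_real[OF alphaR[of i] R] bil_root_real[OF alphaR[of i] alphaR[of i]]
    unfolding A_def P_def by (simp_all add: bil_sym)
  have aa: "A > 0" using root_self_pos alphaR unfolding A_def by blast
  have "(of_int k :: complex) = of_real (2 * P / A)"
    using k unfolding reflect_bil e1 by simp
  then have "real_of_int k = 2 * P / A"
    by (metis of_real_eq_iff of_real_of_int_eq)
  then have "real_of_int k < 0" using neg aa unfolding P_def by (simp add: divide_neg_pos)
  then have kn: "k < 0" by simp
  define \<gamma> where "\<gamma> = reflect (\<alpha> i) \<rho>"
  have g: "\<gamma> = \<rho> - of_int k *s \<alpha> i" unfolding \<gamma>_def reflect_def k ..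
  have gR: "\<gamma> \<in> R" unfolding \<gamma>_def using reflR[OF alphaR R] .
  have "supp (SC C) \<gamma>" using C_iff[OF C] rC a unfolding g supp_def by (auto simp: coef_diff coef_scale coef_alpha)
  then have gC: "\<gamma> \<in> C" using C_iff[OF C] gR by blast
  have kk: "(of_nat (nat (- k)) :: complex) = - of_int k" using kn by (simp add: of_nat_nat)
  have "\<gamma> - \<rho> = of_nat (nat (- k)) *s \<alpha> i" unfolding g kk
    by (simp add: vector_smult_lneg)
  then have "pos (\<gamma> - \<rho>)" using pos_scale_nat[OF pos_alpha] by simp
  then have "\<gamma> = \<rho>" using m gC unfolding maxl_def by blast
  then have "of_int k *s \<alpha> i = 0" using g by simp
  moreover have "\<alpha> i \<noteq> 0" using alphaR zero_notin by metis
  ultimately show False using kn by simp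
qed

lemma maxl_full: assumes m: "maxl \<rho>" and a: "\<alpha> i \<in> SC C" shows "coef i \<rho> \<noteq> 0"
proof -
  have rC: "\<rho> \<in> C" using m maxl_def by blast
  have R: "\<rho> \<in> R" using rC C_iff[OF C] by blast
  have p: "pos \<rho>" using maxl_pos[OF m] .
  have sC: "supp (SC C) \<rho>" using rC C_iff[OF C] by blast
  define A where "A = {a\<in>SC C. \<exists>j. a = \<alpha> j \<and> coef j \<rho> \<noteq> 0}"
  have AS: "A \<subseteq> SC C" unfolding A_def by blast
  have Ane: "A \<noteq> {}"
  proof -
    obtain j where "coef j \<rho> \<noteq> 0" using coef_nonzero R zero_notin by metis
    then have "\<alpha> j \<in> SC C" using sC unfolding supp_def by blast
    then show ?thesis using \<open>coef j \<rho> \<noteq> 0\<close> unfolding A_def by blast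
  qed
  have orth: "\<forall>a\<in>A. \<forall>c\<in>SC C - A. bil a c = 0"
  proof (intro ballI)
    fix a c assume aA: "a \<in> A" and cB: "c \<in> SC C - A"
    obtain i' where i': "a = \<alpha> i'" "coef i' \<rho> \<noteq> 0" using aA unfolding A_def by blast
    obtain j where j: "c = \<alpha> j" using cB SC_sub[OF C] by blast
    have cj: "coef j \<rho> = 0" using cB j unfolding A_def by blast
    have ij: "i' \<noteq> j" using i' cj by blast
    have "bil \<rho> (\<alpha> j) = (\<Sum>m\<in>UNIV. coef m \<rho> * bil (\<alpha> m) (\<alpha> j))"
      by (subst expand[of \<rho>]) (simp add: bil_sum_left bil_scale_left)
    then have sum: "Re (bil \<rho> (\<alpha> j)) = (\<Sum>m\<in>UNIV. real (natc m \<rho>) * Re (bil (\<alpha> m) (\<alpha> j)))"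
      using pos_coef[OF p] by simp
    have terms: "real (natc m \<rho>) * Re (bil (\<alpha> m) (\<alpha> j)) \<le> 0" for m
    proof (cases "m = j")
      case True then show ?thesis using cj pos_coef[OF p, of j] by simp
    next
      case False then show ?thesis using simple_bil_nonpos[OF False] by (simp add: mult_nonneg_nonpos)
    qed
    have "Re (bil \<rho> (\<alpha> j)) \<ge> 0" using maxl_dom[OF m] cB j by blast
    then have "(\<Sum>m\<in>UNIV. - (real (natc m \<rho>) * Re (bil (\<alpha> m) (\<alpha> j)))) = 0"
      using sum terms sum_nonpos[of UNIV "\<lambda>m. real (natc m \<rho>) * Re (bil (\<alpha> m) (\<alpha> j))"]
      by (simp add: sum_negf)
    then have "- (real (natc i' \<rho>) * Re (bil (\<alpha> i') (\<alpha> j))) = 0"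
      using terms by (subst (asm) sum_nonneg_eq_0_iff) auto
    moreover have "natc i' \<rho> \<noteq> 0" using i' pos_coef[OF p, of i'] by auto
    ultimately have "Re (bil (\<alpha> i') (\<alpha> j)) = 0" by simp
    then show "bil a c = 0" using i' j bil_root_real[OF alphaR[of i'] alphaR[of j]] by simp
  qed
  have "A = SC C" using comp_side[OF C AS Ane orth] .
  then show ?thesis using a unfolding A_def using inj_alpha by (auto dest: injD)
qed

lemma maxl_unique: assumes m: "maxl \<rho>" "maxl \<rho>'" shows "\<rho> = \<rho>'"
proof (rule ccontr)
  assume ne: "\<rho> \<noteq> \<rho>'"
  have rC: "\<rho> \<in> C" "\<rho>' \<in> C" using m maxl_def by blast+
  have R: "\<rho> \<in> R" "\<rho>' \<in> R" using rC C_iff[OF C] by blast+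
  have p: "pos \<rho>" "pos \<rho>'" using maxl_pos m by blast+
  have sC: "supp (SC C) \<rho>" "supp (SC C) \<rho>'" using rC C_iff[OF C] by blast+
  have expd: "Re (bil \<rho> x) = (\<Sum>m\<in>UNIV. real (natc m x) * Re (bil \<rho> (\<alpha> m)))" if "pos x" for x
  proof -
    have "bil \<rho> x = (\<Sum>m\<in>UNIV. coef m x * bil \<rho> (\<alpha> m))"
      by (subst expand[of x]) (simp add: bil_sum_right bil_scale_right)
    then show ?thesis using pos_coef[OF that] by simp
  qed
  have tnn: "real (natc m x) * Re (bil \<rho> (\<alpha> m)) \<ge> 0" if "supp (SC C) x" "pos x" for m x
  proof (cases "\<alpha> m \<in> SC C")
    case True then show ?thesis using maxl_dom[OF m(1) True] by simp
  next
    case False then show ?thesis using that pos_coef[OF that(2), of m] unfolding supp_def by simp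
  qed
  obtain m0 where m0: "\<alpha> m0 \<in> SC C" "Re (bil \<rho> (\<alpha> m0)) > 0"
  proof (rule ccontr)
    assume "\<not> thesis"
    then have z: "\<alpha> m \<in> SC C \<Longrightarrow> Re (bil \<rho> (\<alpha> m)) \<le> 0" for m using that by fastforce
    have "real (natc m \<rho>) * Re (bil \<rho> (\<alpha> m)) = 0" for m
    proof (cases "\<alpha> m \<in> SC C")
      case True then show ?thesis using z[OF True] maxl_dom[OF m(1) True] by simp
    next
      case False then show ?thesis using sC pos_coef[OF p(1), of m] unfolding supp_def by simp
    qed
    then have "(\<Sum>m\<in>UNIV. real (natc m \<rho>) * Re (bil \<rho> (\<alpha> m))) = 0" by (intro sum.neutral) blast
    then have "Re (bil \<rho> \<rho>) = 0" using expd[OF p(1)] by simp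
    then show False using root_self_pos R by force
  qed
  have "real (natc m0 \<rho>') * Re (bil \<rho> (\<alpha> m0)) > 0"
    using maxl_full[OF m(2) m0(1)] pos_coef[OF p(2), of m0] m0(2) by simp
  then have "Re (bil \<rho> \<rho>') > 0" unfolding expd[OF p(2)] using tnn[OF sC(2) p(2)]
    by (intro sum_pos2[of UNIV m0]) auto
  moreover have "\<rho>' \<noteq> - \<rho>" using root_not_both[OF R(1) p(1)] p(2) by blast
  ultimately have d: "\<rho> - \<rho>' \<in> R" using root_string[OF R(1) R(2)] ne by metis
  have "supp (SC C) (\<rho> - \<rho>')" using sC unfolding supp_def by (simp add: coef_diff)
  then have dC: "\<rho> - \<rho>' \<in> C" using C_iff[OF C] d by blast
  have dC': "\<rho>' - \<rho> \<in> C" using C_minus[OF C dC] by simp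
  consider "pos (\<rho> - \<rho>')" | "pos (- (\<rho> - \<rho>'))" using root_pos_neg[OF d] by blast
  then show False
  proof cases
    case 1 then have "\<rho> = \<rho>'" using m(2) rC unfolding maxl_def by blast
    then show False using ne by blast
  next
    case 2 then have "pos (\<rho>' - \<rho>)" by simp
    then have "\<rho>' = \<rho>" using m(1) rC unfolding maxl_def by blast
    then show False using ne by blast
  qed
qed

lemma highest: obtains \<rho> where "\<rho> \<in> C" "pos \<rho>" "\<And>\<beta>. \<beta> \<in> C \<Longrightarrow> pos (\<rho> - \<beta>)"
  "\<And>i. \<alpha> i \<in> SC C \<Longrightarrow> coef i \<rho> \<noteq> 0" "is_max_root C (SC C) \<rho>"
proof -
  obtain \<beta>0 where "\<beta>0 \<in> C" using C_nonempty[OF C] by blast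
  then obtain \<rho> where m: "maxl \<rho>" using exists_maxl by blast
  have all: "pos (\<rho> - \<beta>)" if bC: "\<beta> \<in> C" for \<beta>
  proof -
    obtain \<rho>' where "maxl \<rho>'" "pos (\<rho>' - \<beta>)" using exists_maxl[OF bC] by blast
    then show ?thesis using maxl_unique[OF m] by blast
  qed
  have rC: "\<rho> \<in> C" using m maxl_def by blast
  have "is_max_root C (SC C) \<rho>" unfolding is_max_root_def
  proof (intro conjI ballI)
    show "\<rho> \<in> C" using rC .
    fix \<beta> assume b: "\<beta> \<in> C"
    have "supp (SC C) (\<rho> - \<beta>)" using C_iff[OF C] rC b unfolding supp_def by (simp add: coef_diff)
    then show "nonneg_comb (SC C) (\<rho> - \<beta>)" using nonneg_comb_iff[OF SC_sub(1)[OF C]] all[OF b] by blast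
  qed
  then show ?thesis using that rC maxl_pos[OF m] all maxl_full[OF m] by blast
qed

end
end


context RSB0 begin

lemma weylC_pres: assumes C: "C \<in> rs_components Rz" and w: "w \<in> weyl_group C" and x: "x \<in> C"
  shows "w x \<in> C"
proof -
  have "\<forall>a\<in>C. \<forall>c\<in>C. reflect a c \<in> C"
  proof (intro ballI)
    fix a c assume a: "a \<in> C" and c: "c \<in> C"
    have "reflect a c \<in> R" using reflR a c C_iff[OF C] by blast
    moreover have "supp (SC C) (reflect a c)" using a c C_iff[OF C] unfolding reflect_def supp_def
      by (simp add: coef_diff coef_scale)
    ultimately show "reflect a c \<in> C" using C_iff[OF C] by blast
  qed
  then show ?thesis using weyl_pres[OF w] x by blast
qed

lemma weylC_R: "C \<in> rs_components Rz \<Longrightarrow> w \<in> weyl_group C \<Longrightarrow> w \<in> weyl_group R"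
  using weyl_mono C_sub R0_iff by blast

lemma nondegC: "C \<in> rs_components Rz \<Longrightarrow> nondeg C"
  using C_sub R0_iff bilRR unfolding nondeg_def by blast

lemma Nats_pm1: assumes "(1::complex) - c \<in> \<nat>" "1 + c \<in> \<nat>"
  shows "c = -1 \<or> c = 0 \<or> c = 1"
proof -
  obtain a where a: "1 - c = of_nat a" using assms(1) by (metis Nats_cases)
  obtain b where b: "1 + c = of_nat b" using assms(2) by (metis Nats_cases)
  have "(of_nat a + of_nat b :: complex) = 2" unfolding a[symmetric] b[symmetric] by simp
  then have "(of_nat (a + b) :: complex) = of_nat 2" by simp
  then have "a + b = 2" by (simp only: of_nat_eq_iff)
  then have "a = 0 \<or> a = 1 \<or> a = 2" by auto
  moreover have "c = 1 - of_nat a" using a by (simp add: algebra_simps)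
  ultimately show ?thesis by auto
qed

context
  fixes C \<rho> j0
  assumes C: "C \<in> rs_components Rz" and rC: "\<rho> \<in> C" and rmax: "\<forall>\<beta>\<in>C. pos (\<rho> - \<beta>)"
    and j0: "\<alpha> j0 \<in> SC C" and c1: "coef j0 \<rho> = 1"
begin

definition "XX = (SC C - {\<alpha> j0}) \<union> {- \<rho>}"
definition "PX x \<longleftrightarrow> (pos x \<and> coef j0 x = 0) \<or> coef j0 x = -1"
definition "QX x \<longleftrightarrow> (\<exists>m::nat. pos (x + of_nat m *s \<rho>) \<and> coef j0 (x + of_nat m *s \<rho>) = 0)"

lemma bound: assumes b: "\<beta> \<in> C" shows "coef j0 \<beta> = -1 \<or> coef j0 \<beta> = 0 \<or> coef j0 \<beta> = 1"
proof -
  have "pos (\<rho> - \<beta>)" "pos (\<rho> - (- \<beta>))" using rmax b C_minus[OF C b] by auto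
  then have "coef j0 (\<rho> - \<beta>) \<in> \<nat>" "coef j0 (\<rho> - (- \<beta>)) \<in> \<nat>" unfolding pos_def by blast+
  then have "1 - coef j0 \<beta> \<in> \<nat>" "1 + coef j0 \<beta> \<in> \<nat>" using c1 by (simp_all add: coef_diff coef_minus coef_add)
  then show ?thesis using Nats_pm1 by blast
qed

lemma rR: "\<rho> \<in> R" using rC C_iff[OF C] by blast

lemma PX_pos_case: assumes g: "\<gamma> \<in> C" "pos \<gamma>" shows "PX \<gamma> \<or> PX (- \<gamma>)"
proof -
  have "coef j0 \<gamma> \<in> \<nat>" using g unfolding pos_def by blast
  moreover have m1: "(-1::complex) \<notin> \<nat>" using Nats_neg_zero[of 1] by auto
  ultimately have "coef j0 \<gamma> = 0 \<or> coef j0 \<gamma> = 1" using bound[OF g(1)] by auto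
  then show ?thesis unfolding PX_def using g(2) by (auto simp: coef_minus)
qed

lemma PX_or: assumes b: "\<beta> \<in> C" shows "PX \<beta> \<or> PX (- \<beta>)"
proof -
  have R: "\<beta> \<in> R" using b C_iff[OF C] by blast
  consider "pos \<beta>" | "pos (- \<beta>)" using root_pos_neg[OF R] by blast
  then show ?thesis
  proof cases
    case 1 then show ?thesis using PX_pos_case[OF b] by blast
  next
    case 2 then show ?thesis using PX_pos_case[OF C_minus[OF C b]] by auto
  qed
qed

lemma PX_not_both: assumes b: "\<beta> \<in> C" "PX \<beta>" "PX (- \<beta>)" shows False
proof -
  have R: "\<beta> \<in> R" using b C_iff[OF C] by blast
  have one: "(1::complex) \<noteq> -1" by simp
  show False using b(2,3) unfolding PX_def coef_minus
  proof (elim disjE conjE)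
    assume "pos \<beta>" "pos (- \<beta>)" then show False using root_not_both[OF R] by blast
  qed (use one in auto)
qed

lemma PX_QX: assumes b: "\<beta> \<in> C" "PX \<beta>" shows "QX \<beta>"
  using b(2) unfolding PX_def
proof (elim disjE conjE)
  assume "pos \<beta>" "coef j0 \<beta> = 0"
  then show "QX \<beta>" unfolding QX_def by (intro exI[of _ 0]) simp
next
  assume c: "coef j0 \<beta> = -1"
  have "pos (\<rho> - (- \<beta>))" using rmax C_minus[OF C b(1)] by blast
  then show "QX \<beta>" unfolding QX_def using c c1
    by (intro exI[of _ 1]) (simp add: coef_add add.commute)
qed

lemma QX_PX: assumes b: "\<beta> \<in> C" "QX \<beta>" shows "PX \<beta>"
proof -
  obtain m :: nat where m: "pos (\<beta> + of_nat m *s \<rho>)" "coef j0 (\<beta> + of_nat m *s \<rho>) = 0"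
    using b(2) unfolding QX_def by blast
  have c: "coef j0 \<beta> = - of_nat m" using m(2) c1 by (simp add: coef_add coef_scale eq_neg_iff_add_eq_0)
  consider "coef j0 \<beta> = -1" | "coef j0 \<beta> = 0" | "coef j0 \<beta> = 1" using bound[OF b(1)] by blast
  then show ?thesis
  proof cases
    case 1 then show ?thesis unfolding PX_def by blast
  next
    case 2 then have "m = 0" using c by simp
    then show ?thesis using m 2 unfolding PX_def by simp
  next
    case 3
    then have "- (of_nat m :: complex) = 1" using c by simp
    then have "(of_nat m :: complex) = -1" by (metis minus_minus)
    then have "(of_nat (m + 1) :: complex) = 0" by simp
    then show ?thesis by (simp only: of_nat_eq_0_iff)
  qed
qed

lemma QX_zero: "QX 0" unfolding QX_def by (intro exI[of _ 0]) (simp add: pos_zero)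

lemma QX_add: assumes "QX x" "QX y" shows "QX (x + y)"
proof -
  obtain m :: nat where m: "pos (x + of_nat m *s \<rho>)" "coef j0 (x + of_nat m *s \<rho>) = 0"
    using assms(1) unfolding QX_def by blast
  obtain m' :: nat where m': "pos (y + of_nat m' *s \<rho>)" "coef j0 (y + of_nat m' *s \<rho>) = 0"
    using assms(2) unfolding QX_def by blast
  have e: "x + y + of_nat (m + m') *s \<rho> = (x + of_nat m *s \<rho>) + (y + of_nat m' *s \<rho>)"
    by (simp add: vector_sadd_rdistrib algebra_simps)
  have c: "coef j0 (x + y + of_nat (m + m') *s \<rho>) = coef j0 (x + of_nat m *s \<rho>) + coef j0 (y + of_nat m' *s \<rho>)"
    by (subst e) (rule coef_add)
  have p: "pos (x + y + of_nat (m + m') *s \<rho>)" by (subst e) (rule pos_add[OF m(1) m'(1)])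
  show ?thesis unfolding QX_def
    by (intro exI[of _ "m + m'"]) (use c p m(2) m'(2) in simp)
qed

lemma QX_scale: assumes "QX x" shows "QX (of_nat k *s x)"
proof (induction k)
  case 0 then show ?case using QX_zero by simp
next
  case (Suc k)
  have "of_nat (Suc k) *s x = x + of_nat k *s x" by (simp add: vector_sadd_rdistrib)
  then show ?case using QX_add[OF assms Suc] by simp
qed

lemma QX_sum: "(\<And>j. j \<in> A \<Longrightarrow> QX (f j)) \<Longrightarrow> QX (\<Sum>j\<in>A. f j)"
  by (induction A rule: infinite_finite_induct) (auto simp: QX_zero QX_add)

lemma XX_C: assumes "\<xi> \<in> XX" shows "\<xi> \<in> C \<and> PX \<xi>"
proof -
  consider "\<xi> \<in> SC C" "\<xi> \<noteq> \<alpha> j0" | "\<xi> = - \<rho>" using assms unfolding XX_def by blast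
  then show ?thesis
  proof cases
    case 1
    then obtain i where i: "\<xi> = \<alpha> i" "i \<noteq> j0" using SC_sub[OF C] by blast
    have "\<xi> \<in> C" using 1 SC_sub[OF C] by blast
    moreover have "PX \<xi>" unfolding PX_def i using i(2) pos_alpha by (simp add: coef_alpha)
    ultimately show ?thesis by blast
  next
    case 2
    have "\<xi> \<in> C" using 2 C_minus[OF C rC] by simp
    moreover have "PX \<xi>" unfolding PX_def 2 using c1 by (simp add: coef_minus)
    ultimately show ?thesis by blast
  qed
qed

lemma T2: assumes w: "w \<in> weyl_group C" and h: "\<forall>a\<in>SC C. PX (inv w a)"
  and b: "\<beta> \<in> C" "pos \<beta>" shows "PX (inv w \<beta>)"
proof -
  have nd: "nondeg C" using nondegC[OF C] .
  have v: "inv w \<in> weyl_group C" using weyl_inv_in[OF nd w] .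
  have sb: "supp (SC C) \<beta>" using b C_iff[OF C] by blast
  have "\<beta> = (\<Sum>i\<in>UNIV. coef i \<beta> *s \<alpha> i)" by (rule expand)
  also have "\<dots> = (\<Sum>i\<in>UNIV. of_nat (natc i \<beta>) *s \<alpha> i)" using pos_coef[OF b(2)] by simp
  finally have eq: "\<beta> = (\<Sum>i\<in>UNIV. of_nat (natc i \<beta>) *s \<alpha> i)" .
  have "inv w \<beta> = inv w (\<Sum>i\<in>UNIV. of_nat (natc i \<beta>) *s \<alpha> i)" using arg_cong[OF eq, of "inv w"] .
  also have "\<dots> = (\<Sum>i\<in>UNIV. of_nat (natc i \<beta>) *s inv w (\<alpha> i))"
    by (simp add: weyl_sum[OF v] weyl_scale[OF v])
  finally have "inv w \<beta> = (\<Sum>i\<in>UNIV. of_nat (natc i \<beta>) *s inv w (\<alpha> i))" .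
  moreover have "QX (\<Sum>i\<in>UNIV. of_nat (natc i \<beta>) *s inv w (\<alpha> i))"
  proof (rule QX_sum)
    fix i
    show "QX (of_nat (natc i \<beta>) *s inv w (\<alpha> i))"
    proof (cases "\<alpha> i \<in> SC C")
      case True
      then have "inv w (\<alpha> i) \<in> C" using weylC_pres[OF C v] SC_sub[OF C] by blast
      then show ?thesis using QX_scale PX_QX h True by blast
    next
      case False
      then have "natc i \<beta> = 0" using sb pos_coef[OF b(2), of i] unfolding supp_def by simp
      then show ?thesis using QX_zero by simp
    qed
  qed
  ultimately show ?thesis using QX_PX weylC_pres[OF C v b(1)] by simp
qed

definition "bad w = {x\<in>C. PX x \<and> \<not> pos (w x)}"

lemma T3: "\<exists>w\<in>weyl_group C. \<forall>x\<in>C. PX x \<longrightarrow> pos (w x)"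
proof -
  have nd: "nondeg C" using nondegC[OF C] .
  obtain w0 where w0: "w0 \<in> weyl_group C" and mn: "\<And>w. w \<in> weyl_group C \<Longrightarrow> card (bad w0) \<le> card (bad w)"
    using ex_has_least_nat[of "\<lambda>w. w \<in> weyl_group C" id "\<lambda>w. card (bad w)"] weyl_group.weyl_id by blast
  have "bad w0 = {}"
  proof (rule ccontr)
    assume "bad w0 \<noteq> {}"
    then obtain x0 where x0: "x0 \<in> C" "PX x0" "\<not> pos (w0 x0)" unfolding bad_def by blast
    have v: "inv w0 \<in> weyl_group C" using weyl_inv_in[OF nd w0] .
    have "\<exists>a\<in>SC C. \<not> PX (inv w0 a)"
    proof (rule ccontr)
      assume "\<not> ?thesis"
      then have h: "\<forall>a\<in>SC C. PX (inv w0 a)" by blast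
      have wx: "w0 x0 \<in> C" using weylC_pres[OF C w0 x0(1)] .
      then have "pos (- w0 x0)" using root_pos_neg x0(3) C_iff[OF C] by blast
      moreover have "- w0 x0 \<in> C" using C_minus[OF C wx] .
      ultimately have "PX (inv w0 (- w0 x0))" using T2[OF w0 h] by blast
      then have "PX (- x0)" using weyl_minus[OF v] weyl_inv_l[OF nd w0] by simp
      then show False using PX_not_both[OF x0(1,2)] by blast
    qed
    then obtain a where a: "a \<in> SC C" "\<not> PX (inv w0 a)" by blast
    obtain i where ai: "a = \<alpha> i" using a SC_sub[OF C] by blast
    have aC: "a \<in> C" using a SC_sub[OF C] by blast
    have ia: "inv w0 a \<in> C" using weylC_pres[OF C v aC] .
    define y0 where "y0 = - inv w0 a"
    have y0: "y0 \<in> C" "PX y0" using PX_or[OF ia] a C_minus[OF C ia] unfolding y0_def by auto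
    have wy0: "w0 y0 = - a" unfolding y0_def using weyl_minus[OF w0] weyl_inv_r[OF nd w0] by simp
    define w1 where "w1 = reflect a \<circ> w0"
    have w1: "w1 \<in> weyl_group C" unfolding w1_def using weyl_group.weyl_step[OF w0 aC] .
    have aa: "bil a a \<noteq> 0" using nd aC unfolding nondeg_def by blast
    have y0bad: "y0 \<in> bad w0" unfolding bad_def using y0 wy0 root_not_both[OF alphaR pos_alpha] ai by auto
    have "reflect a (w0 y0) = a" using wy0 reflect_minus[of a a] reflect_self[OF aa] by simp
    then have "y0 \<notin> bad w1" unfolding bad_def w1_def using ai pos_alpha by auto
    moreover have "bad w1 \<subseteq> bad w0"
    proof
      fix x assume x: "x \<in> bad w1"
      then have xC: "x \<in> C" "PX x" "\<not> pos (reflect a (w0 x))" unfolding bad_def w1_def by auto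
      have "\<not> pos (w0 x)"
      proof
        assume p: "pos (w0 x)"
        have wxR: "w0 x \<in> R" using weylC_pres[OF C w0 xC(1)] C_iff[OF C] by blast
        have "w0 x \<noteq> a"
        proof
          assume "w0 x = a"
          then have "x = - y0" unfolding y0_def using weyl_inv_l[OF nd w0] by (metis minus_minus)
          then show False using PX_not_both[OF y0(1,2)] xC(2) by simp
        qed
        then show False using simple_refl_pos[OF wxR p] xC(3) ai by blast
      qed
      then show "x \<in> bad w0" unfolding bad_def using xC by blast
    qed
    ultimately have "bad w1 \<subseteq> bad w0 - {y0}" by blast
    moreover have "finite (bad w0)" unfolding bad_def using finC[OF C] by simp
    ultimately have "card (bad w1) < card (bad w0)"
      using y0bad by (meson card_Diff1_less card_mono finite_Diff order_le_less_trans)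
    then show False using mn[OF w1] by simp
  qed
  then show ?thesis using w0 unfolding bad_def by blast
qed

lemma GL: assumes p: "p \<in> R" "pos p" and q: "pos q" and e: "\<alpha> g = p + q" shows "p = \<alpha> g"
proof -
  have z: "coef d p = 0" if "d \<noteq> g" for d
  proof -
    have "coef d p + coef d q = 0" using e that by (metis coef_add coef_alpha)
    then have "- coef d p \<in> \<nat>" using q unfolding pos_def by (metis add.commute add_eq_0_iff2 eq_neg_iff_add_eq_0)
    then show ?thesis using p(2) Nats_neg_zero unfolding pos_def by blast
  qed
  have "p = coef g p *s \<alpha> g" unfolding vec_eq_coef[of p] using z by (auto simp: coef_scale coef_alpha)
  then have "coef g p = 1 \<or> coef g p = -1" using reduced_mult[OF alphaR[of g], of "coef g p"] p(1) by simp
  moreover have "coef g p \<noteq> -1" using p(2) Nats_neg_zero[of 1] unfolding pos_def by (metis Nats_1 one_neq_zero)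
  ultimately show ?thesis using \<open>p = _\<close> by simp
qed

lemma WZ: assumes w: "w \<in> weyl_group C" and wp: "\<forall>x\<in>C. PX x \<longrightarrow> pos (w x)"
  and z: "pos z" "coef j0 z = 0" "supp (SC C) z" shows "pos (w z)"
proof -
  have "z = (\<Sum>i\<in>UNIV. coef i z *s \<alpha> i)" by (rule expand)
  also have "\<dots> = (\<Sum>i\<in>UNIV. of_nat (natc i z) *s \<alpha> i)" using pos_coef[OF z(1)] by simp
  finally have eq: "z = (\<Sum>i\<in>UNIV. of_nat (natc i z) *s \<alpha> i)" .
  have "w z = w (\<Sum>i\<in>UNIV. of_nat (natc i z) *s \<alpha> i)" using arg_cong[OF eq, of w] .
  also have "\<dots> = (\<Sum>i\<in>UNIV. of_nat (natc i z) *s w (\<alpha> i))"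
    by (simp add: weyl_sum[OF w] weyl_scale[OF w])
  finally have e: "w z = (\<Sum>i\<in>UNIV. of_nat (natc i z) *s w (\<alpha> i))" .
  have "pos (of_nat (natc i z) *s w (\<alpha> i))" for i
  proof (cases "natc i z = 0")
    case True then show ?thesis using pos_zero by simp
  next
    case False
    then have "coef i z \<noteq> 0" using pos_coef[OF z(1), of i] by simp
    then have "\<alpha> i \<in> SC C" "i \<noteq> j0" using z(2,3) unfolding supp_def by auto
    then have "\<alpha> i \<in> XX" unfolding XX_def using inj_alpha by (auto dest: injD)
    then have "pos (w (\<alpha> i))" using XX_C wp by blast
    then show ?thesis using pos_scale_nat by simp
  qed
  then show ?thesis unfolding e by (intro pos_sum) auto
qed

lemma T4: "\<exists>v\<in>weyl_group C. \<forall>\<gamma>\<in>SC C. v \<gamma> \<in> XX"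
proof -
  have nd: "nondeg C" using nondegC[OF C] .
  obtain w where w: "w \<in> weyl_group C" and wp: "\<forall>x\<in>C. PX x \<longrightarrow> pos (w x)" using T3 by blast
  have v: "inv w \<in> weyl_group C" using weyl_inv_in[OF nd w] .
  have "inv w \<gamma> \<in> XX" if g: "\<gamma> \<in> SC C" for \<gamma>
  proof -
    obtain gi where gi: "\<gamma> = \<alpha> gi" using g SC_sub[OF C] by blast
    have gC: "\<gamma> \<in> C" using g SC_sub[OF C] by blast
    define y where "y = inv w \<gamma>"
    have yC: "y \<in> C" unfolding y_def using weylC_pres[OF C v gC] .
    have wy: "w y = \<gamma>" unfolding y_def using weyl_inv_r[OF nd w] .
    have py: "PX y"
    proof (rule ccontr)
      assume "\<not> PX y"
      then have "PX (- y)" using PX_or[OF yC] by blast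
      then have "pos (w (- y))" using wp C_minus[OF C yC] by blast
      then have "pos (- \<gamma>)" using weyl_minus[OF w] wy by simp
      then show False using root_not_both[OF alphaR pos_alpha] gi by blast
    qed
    have sy: "supp (SC C) y" using yC C_iff[OF C] by blast
    show ?thesis unfolding y_def[symmetric] using py unfolding PX_def
    proof (elim disjE conjE)
      assume p: "pos y" and c0: "coef j0 y = 0"
      obtain i where i: "coef i y \<noteq> 0" using coef_nonzero yC C_iff[OF C] zero_notin by metis
      have ni: "natc i y \<ge> 1" using pos_coef[OF p, of i] i by (cases "natc i y") auto
      have aiS: "\<alpha> i \<in> SC C" "i \<noteq> j0" using i sy c0 unfolding supp_def by auto
      have aiX: "\<alpha> i \<in> XX" unfolding XX_def using aiS inj_alpha by (auto dest: injD)
      have pz: "pos (y - \<alpha> i)" unfolding pos_def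
      proof
        fix j show "coef j (y - \<alpha> i) \<in> \<nat>"
        proof (cases "j = i")
          case True
          then have "coef j (y - \<alpha> i) = of_nat (natc i y - 1)"
            using ni pos_coef[OF p, of i] by (simp add: coef_diff coef_alpha of_nat_diff)
          then show ?thesis by simp
        next
          case False then show ?thesis using p unfolding pos_def by (simp add: coef_diff coef_alpha)
        qed
      qed
      have cz: "coef j0 (y - \<alpha> i) = 0" using c0 aiS by (simp add: coef_diff coef_alpha)
      have sz: "supp (SC C) (y - \<alpha> i)" using sy aiS unfolding supp_def by (auto simp: coef_diff coef_alpha)
      have pwz: "pos (w (y - \<alpha> i))" using WZ[OF w wp pz cz sz] .
      have pwa: "pos (w (\<alpha> i))" using XX_C[OF aiX] wp by blast
      have wR: "w (\<alpha> i) \<in> R" using weylC_pres[OF C w] XX_C[OF aiX] C_iff[OF C] by blast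
      have "\<alpha> gi = w (\<alpha> i) + w (y - \<alpha> i)" using wy gi weyl_add[OF w, of "\<alpha> i" "y - \<alpha> i"] by simp
      then have "w (\<alpha> i) = \<gamma>" using GL[OF wR pwa pwz] gi by simp
      then have "\<alpha> i = y" unfolding y_def using weyl_inv_l[OF nd w] by metis
      then show "y \<in> XX" using aiX by simp
    next
      assume c: "coef j0 y = -1"
      define z where "z = y + \<rho>"
      have pz: "pos z" unfolding z_def using rmax C_minus[OF C yC] by (metis diff_minus_eq_add add.commute)
      have cz: "coef j0 z = 0" unfolding z_def using c c1 by (simp add: coef_add)
      have sz: "supp (SC C) z" unfolding z_def using sy rC C_iff[OF C] unfolding supp_def by (auto simp: coef_add)
      have pwz: "pos (w z)" using WZ[OF w wp pz cz sz] .
      have mX: "- \<rho> \<in> XX" unfolding XX_def by blast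
      have pwa: "pos (w (- \<rho>))" using XX_C[OF mX] wp by blast
      have wR: "w (- \<rho>) \<in> R" using weylC_pres[OF C w] XX_C[OF mX] C_iff[OF C] by blast
      have "y = - \<rho> + z" unfolding z_def by simp
      then have "\<alpha> gi = w (- \<rho>) + w z" using wy gi weyl_add[OF w] by metis
      then have "w (- \<rho>) = \<gamma>" using GL[OF wR pwa pwz] gi by simp
      then have "- \<rho> = y" unfolding y_def using weyl_inv_l[OF nd w] by metis
      then show "y \<in> XX" using mX by simp
    qed
  qed
  then show ?thesis using v by blast
qed

end
end


context RSB0 begin

lemma comp_class: assumes C: "C \<in> rs_components Rz" and b: "\<beta> \<in> C"
  shows "C = {x\<in>Rz. (\<beta>, x) \<in> rel\<^sup>*}"
proof -
  obtain a where a: "a \<in> Rz" "C = {\<beta>\<in>Rz. (a, \<beta>) \<in> rel\<^sup>*}" using C_obtain[OF C] by blast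
  have ab: "(a, \<beta>) \<in> rel\<^sup>*" "(\<beta>, a) \<in> rel\<^sup>*" using a b rtrancl_rel_sym by auto
  show ?thesis unfolding a(2) using ab by (auto intro: rtrancl_trans)
qed

lemma comp_eq: "C \<in> rs_components Rz \<Longrightarrow> C' \<in> rs_components Rz \<Longrightarrow> \<beta> \<in> C \<Longrightarrow> \<beta> \<in> C' \<Longrightarrow> C = C'"
  using comp_class[of C \<beta>] comp_class[of C' \<beta>] by simp

lemma comp_orth: assumes C: "C \<in> rs_components Rz" "C' \<in> rs_components Rz" "C \<noteq> C'"
  and b: "\<beta> \<in> C" "\<beta>' \<in> C'" shows "bil \<beta> \<beta>' = 0"
proof (rule ccontr)
  assume "bil \<beta> \<beta>' \<noteq> 0"
  then have "\<beta>' \<in> C" using C_closed[OF C(1) b(1)] C_sub[OF C(2)] b(2) by blast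
  then show False using comp_eq[OF C(1,2) _ b(2)] C(3) by blast
qed

lemma comp_of: assumes "a \<in> Rz" shows "{x\<in>Rz. (a, x) \<in> rel\<^sup>*} \<in> rs_components Rz" "a \<in> {x\<in>Rz. (a, x) \<in> rel\<^sup>*}"
  using assms unfolding comps_def' by auto

lemma finite_comps: "finite (rs_components Rz)"
proof -
  have "rs_components Rz \<subseteq> Pow R" using C_sub R0_iff by blast
  then show ?thesis by (rule finite_subset) (simp add: finR)
qed

lemma combine: assumes F: "F \<subseteq> rs_components Rz"
  and vC: "\<And>C. C \<in> F \<Longrightarrow> vv C \<in> weyl_group C \<and> (\<forall>\<gamma>\<in>SC C. vv C \<gamma> \<in> C)"
  shows "\<exists>v\<in>weyl_group R. \<forall>C\<in>rs_components Rz. \<forall>\<gamma>\<in>SC C. v \<gamma> = (if C \<in> F then vv C \<gamma> else \<gamma>)"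
proof -
  have fin: "finite F" using F finite_comps finite_subset by blast
  show ?thesis using fin F vC
  proof (induction F rule: finite_induct)
    case empty then show ?case by (intro bexI[of _ id]) (auto intro: weyl_group.weyl_id)
  next
    case (insert C1 F)
    obtain v where v: "v \<in> weyl_group R"
      "\<forall>C\<in>rs_components Rz. \<forall>\<gamma>\<in>SC C. v \<gamma> = (if C \<in> F then vv C \<gamma> else \<gamma>)"
      using insert.IH[OF _ insert.prems(2)] insert.prems(1) by blast
    have C1: "C1 \<in> rs_components Rz" using insert by blast
    have v1: "vv C1 \<in> weyl_group C1" "\<forall>\<gamma>\<in>SC C1. vv C1 \<gamma> \<in> C1" using insert.prems(2)[of C1] by blast+
    have v1R: "vv C1 \<in> weyl_group R" using weylC_R[OF C1 v1(1)] .
    have fix1: "vv C1 x = x" if "x \<in> C" "C \<in> rs_components Rz" "C \<noteq> C1" for x C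
    proof -
      have "\<forall>c\<in>C1. bil c x = 0" using comp_orth[OF C1 that(2)] that by auto
      then show ?thesis using weyl_fix[OF v1(1)] by blast
    qed
    have "\<forall>C\<in>rs_components Rz. \<forall>\<gamma>\<in>SC C. (vv C1 \<circ> v) \<gamma> = (if C \<in> insert C1 F then vv C \<gamma> else \<gamma>)"
    proof (intro ballI)
      fix C \<gamma> assume C: "C \<in> rs_components Rz" and g: "\<gamma> \<in> SC C"
      have gC: "\<gamma> \<in> C" using g SC_sub[OF C] by blast
      show "(vv C1 \<circ> v) \<gamma> = (if C \<in> insert C1 F then vv C \<gamma> else \<gamma>)"
      proof (cases "C \<in> F")
        case True
        then have "C \<noteq> C1" using insert.hyps by blast
        moreover have "vv C \<gamma> \<in> C" using insert.prems(2)[of C] True g by blast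
        ultimately show ?thesis using v(2) C g True fix1 C by simp
      next
        case False
        show ?thesis
        proof (cases "C = C1")
          case True then show ?thesis using v(2) C g False by simp
        next
          case ne: False then show ?thesis using v(2) C g False fix1[OF gC C ne] by simp
        qed
      qed
    qed
    then show ?case using weyl_comp[OF v1R v(1)] by blast
  qed
qed

end


context RSB0 begin

lemma supp_repr: assumes S: "S \<subseteq> range \<alpha>" and s: "supp S x"
  shows "x = (\<Sum>\<gamma>\<in>S. coef (inv \<alpha> \<gamma>) x *s \<gamma>)"
proof -
  have "x = (\<Sum>i\<in>UNIV. coef i x *s \<alpha> i)" by (rule expand)
  also have "\<dots> = (\<Sum>i\<in>UNIV. (if \<alpha> i \<in> S then coef (inv \<alpha> (\<alpha> i)) x else 0) *s \<alpha> i)"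
    using s inj_alpha unfolding supp_def by (intro sum.cong) auto
  also have "\<dots> = (\<Sum>\<gamma>\<in>S. coef (inv \<alpha> \<gamma>) x *s \<gamma>)" using comb_sub[OF S] by simp
  finally show ?thesis .
qed

lemma comp_data:
  assumes C: "C \<in> rs_components Rz" and w: "w \<in> weyl_group R"
    and wS: "\<forall>a\<in>S0. pos (w a)"
    and kb: "\<forall>\<beta>\<in>R. pos \<beta> \<longrightarrow> coef k \<beta> = 0 \<or> coef k \<beta> = 1"
    and bad: "\<exists>\<gamma>\<in>SC C. coef k (w \<gamma>) = 1"
  shows "\<exists>\<rho> j v. \<rho> \<in> C \<and> is_max_root C (SC C) \<rho> \<and> coef k (w \<rho>) = 1
     \<and> (\<forall>i. \<alpha> i \<in> SC C \<longrightarrow> i \<noteq> j \<longrightarrow> coef k (w (\<alpha> i)) = 0) \<and> \<alpha> j \<in> SC C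
     \<and> coef j \<rho> = 1 \<and> v \<in> weyl_group C \<and> (\<forall>\<gamma>\<in>SC C. v \<gamma> \<in> XX C \<rho> j)"
proof -
  obtain \<rho> where r: "\<rho> \<in> C" "pos \<rho>" "\<And>\<beta>. \<beta> \<in> C \<Longrightarrow> pos (\<rho> - \<beta>)"
    "\<And>i. \<alpha> i \<in> SC C \<Longrightarrow> coef i \<rho> \<noteq> 0" "is_max_root C (SC C) \<rho>"
    using highest[OF C] by blast
  obtain j where j: "\<alpha> j \<in> SC C" "coef k (w (\<alpha> j)) = 1" using bad SC_sub[OF C] by blast
  have nd: "nondeg R" using nondegR .
  have rR: "\<rho> \<in> R" using r(1) C_iff[OF C] by blast
  have sr: "supp (SC C) \<rho>" using r(1) C_iff[OF C] by blast
  have S0i: "\<alpha> i \<in> S0 \<Longrightarrow> w (\<alpha> i) \<in> R \<and> pos (w (\<alpha> i))" for i using weylR[OF w alphaR] wS by blast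
  define e where "e i = (if \<alpha> i \<in> S0 then natc k (w (\<alpha> i)) else 0)" for i
  define tm where "tm i = natc i \<rho> * e i" for i
  have ce: "\<alpha> i \<in> S0 \<Longrightarrow> coef k (w (\<alpha> i)) = of_nat (e i)" for i
    unfolding e_def using pos_coef S0i by simp
  have "w \<rho> = w (\<Sum>i\<in>UNIV. coef i \<rho> *s \<alpha> i)" using arg_cong[OF expand[of \<rho>], of w] .
  also have "\<dots> = (\<Sum>i\<in>UNIV. coef i \<rho> *s w (\<alpha> i))" by (simp add: weyl_sum[OF w] weyl_scale[OF w])
  finally have wr: "w \<rho> = (\<Sum>i\<in>UNIV. coef i \<rho> *s w (\<alpha> i))" .
  have "coef k (w \<rho>) = (\<Sum>i\<in>UNIV. coef i \<rho> * coef k (w (\<alpha> i)))" unfolding wr by (simp add: coef_sum coef_scale)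
  also have "\<dots> = (\<Sum>i\<in>UNIV. of_nat (tm i))"
  proof (rule sum.cong)
    fix i show "coef i \<rho> * coef k (w (\<alpha> i)) = of_nat (tm i)"
    proof (cases "\<alpha> i \<in> S0")
      case True then show ?thesis unfolding tm_def using ce pos_coef[OF r(2)] by simp
    next
      case False
      then have "coef i \<rho> = 0" using sr SC_sub[OF C] unfolding supp_def by blast
      then show ?thesis unfolding tm_def e_def using False by simp
    qed
  qed simp
  finally have ck: "coef k (w \<rho>) = of_nat (\<Sum>i\<in>UNIV. tm i)" by simp
  have jS0: "\<alpha> j \<in> S0" using j SC_sub[OF C] by blast
  have ej: "e j = 1" using ce[OF jS0] j(2) by (metis of_nat_1 of_nat_eq_iff)
  have nj: "natc j \<rho> \<ge> 1" using r(4)[OF j(1)] pos_coef[OF r(2), of j] by (cases "natc j \<rho>") auto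
  have tj: "tm j \<ge> 1" unfolding tm_def using ej nj by simp
  have le: "tm j \<le> (\<Sum>i\<in>UNIV. tm i)" by (rule member_le_sum) auto
  have wrR: "w \<rho> \<in> R" using weylR[OF w rR] .
  have sn0: "(\<Sum>i\<in>UNIV. tm i) \<noteq> 0" using tj le by linarith
  have n1: "coef k (w \<rho>) \<in> \<nat>" unfolding ck by (rule of_nat_in_Nats)
  have n2: "coef k (w \<rho>) \<noteq> 0" unfolding ck of_nat_eq_0_iff using sn0 .
  have "pos (w \<rho>)" using pos_of_coef[OF wrR n1 n2] .
  then have "coef k (w \<rho>) = 0 \<or> coef k (w \<rho>) = 1" using kb wrR by blast
  then have "coef k (w \<rho>) = 1" using n2 by blast
  then have sum1: "(\<Sum>i\<in>UNIV. tm i) = 1" unfolding ck of_nat_eq_1_iff .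
  have ck1: "coef k (w \<rho>) = 1" using ck sum1 by simp
  have others: "coef k (w (\<alpha> i)) = 0" if i: "\<alpha> i \<in> SC C" "i \<noteq> j" for i
  proof -
    have "tm i + tm j = (\<Sum>i\<in>{i, j}. tm i)" using i(2) by simp
    also have "\<dots> \<le> (\<Sum>i\<in>UNIV. tm i)" by (rule sum_mono2) auto
    finally have "tm i = 0" using sum1 tj by simp
    moreover have "natc i \<rho> \<noteq> 0" using r(4)[OF i(1)] pos_coef[OF r(2), of i] by auto
    ultimately have "e i = 0" unfolding tm_def by simp
    moreover have "\<alpha> i \<in> S0" using i SC_sub[OF C] by blast
    ultimately show ?thesis using ce by simp
  qed
  have "natc j \<rho> = 1"
  proof -
    have "tm j \<le> 1" using le sum1 by simp
    then show ?thesis using nj ej unfolding tm_def by simp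
  qed
  then have c1: "coef j \<rho> = 1" using pos_coef[OF r(2), of j] by simp
  obtain v where v: "v \<in> weyl_group C" "\<forall>\<gamma>\<in>SC C. v \<gamma> \<in> XX C \<rho> j"
    using T4[OF C r(1) _ j(1) c1] r(3) by blast
  show ?thesis using r(1,5) ck1 others j(1) c1 v by blast
qed

definition "good w k C \<rho> j v \<longleftrightarrow> \<rho> \<in> C \<and> is_max_root C (SC C) \<rho> \<and> coef k (w \<rho>) = 1
     \<and> (\<forall>i. \<alpha> i \<in> SC C \<longrightarrow> i \<noteq> j \<longrightarrow> coef k (w (\<alpha> i)) = 0) \<and> \<alpha> j \<in> SC C
     \<and> coef j \<rho> = 1 \<and> v \<in> weyl_group C \<and> (\<forall>\<gamma>\<in>SC C. v \<gamma> \<in> XX C \<rho> j)"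

lemma affine_inv:
  assumes g: "g \<in> weyl_group R"
    and kb: "\<forall>\<beta>\<in>R. pos \<beta> \<longrightarrow> coef k \<beta> = 0 \<or> coef k \<beta> = 1"
    and P1: "\<forall>\<beta>\<in>R. pos \<beta> \<longrightarrow> coef k \<beta> = 0 \<longrightarrow> pos (g \<beta>) \<and> bil (g \<beta>) t = 0"
    and P2: "\<forall>\<beta>\<in>R. pos \<beta> \<longrightarrow> coef k \<beta> = 1 \<longrightarrow> pos (- g \<beta>) \<and> bil (g \<beta>) t = -1"
    and eta_inv: "\<forall>w\<in>weyl_group R. \<forall>\<beta>\<in>R. \<eta> (w \<beta>) = \<eta> \<beta>"
    and cox: "coxeter_condition R S0 \<eta> hbar"
  shows "(\<lambda>y. g y + hbar *s t) ` Dset R \<alpha> \<eta> S0 \<subseteq> Dset R \<alpha> \<eta> S0"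
proof
  fix z assume "z \<in> (\<lambda>y. g y + hbar *s t) ` Dset R \<alpha> \<eta> S0"
  then obtain w x where w: "w \<in> weyl_group R" "w ` S0 \<subseteq> pos_roots R \<alpha>" and x: "x \<in> Hyp \<eta> S0"
    and z: "z = g (w x) + hbar *s t"
    unfolding Dset_def Wplus_def by blast
  have nd: "nondeg R" using nondegR .
  have wS: "\<forall>a\<in>S0. pos (w a)" and wSR: "\<forall>a\<in>S0. w a \<in> R" using w(2) unfolding pos_roots_eq by auto
  have hx: "\<And>a. a \<in> S0 \<Longrightarrow> bil a x = \<eta> a" using x unfolding Hyp_def by blast
  define Bad where "Bad = {C\<in>rs_components Rz. \<exists>\<gamma>\<in>SC C. coef k (w \<gamma>) = 1}"
  have ex1: "\<forall>C\<in>Bad. \<exists>\<rho> j v. good w k C \<rho> j v"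
    using comp_data[OF _ w(1) wS kb] unfolding Bad_def good_def by blast
  obtain \<rho>f where ex2: "\<forall>C\<in>Bad. \<exists>j v. good w k C (\<rho>f C) j v" using bchoice[OF ex1] by blast
  obtain jf where ex3: "\<forall>C\<in>Bad. \<exists>v. good w k C (\<rho>f C) (jf C) v" using bchoice[OF ex2] by blast
  obtain vf where VF: "\<forall>C\<in>Bad. good w k C (\<rho>f C) (jf C) (vf C)" using bchoice[OF ex3] by blast
  have BadC: "Bad \<subseteq> rs_components Rz" unfolding Bad_def by blast
  have vfC: "vf C \<in> weyl_group C \<and> (\<forall>\<gamma>\<in>SC C. vf C \<gamma> \<in> C)" if "C \<in> Bad" for C
  proof -
    have C: "C \<in> rs_components Rz" using that BadC by blast
    have gd: "good w k C (\<rho>f C) (jf C) (vf C)" using VF that by blast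
    have "\<rho>f C \<in> C" "\<forall>\<beta>\<in>C. pos (\<rho>f C - \<beta>)" "\<alpha> (jf C) \<in> SC C" "coef (jf C) (\<rho>f C) = 1"
      using gd unfolding good_def is_max_root_def by (auto simp: nonneg_comb_iff[OF SC_sub(1)[OF C]])
    then show ?thesis using gd XX_C[OF C] unfolding good_def by blast
  qed
  obtain v where v: "v \<in> weyl_group R"
    "\<forall>C\<in>rs_components Rz. \<forall>\<gamma>\<in>SC C. v \<gamma> = (if C \<in> Bad then vf C \<gamma> else \<gamma>)"
    using combine[OF BadC vfC] by blast
  define w' where "w' = g \<circ> w \<circ> v"
  have w': "w' \<in> weyl_group R" unfolding w'_def using weyl_comp[OF weyl_comp[OF g w(1)] v(1)] .
  have key: "pos (w' a) \<and> bil (w' a) z = \<eta> a" if a: "a \<in> S0" for a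
  proof -
    define C where "C = {x\<in>Rz. (a, x) \<in> rel\<^sup>*}"
    have C: "C \<in> rs_components Rz" "a \<in> C" using comp_of[OF S0_Rz[OF a]] unfolding C_def by auto
    have aSC: "a \<in> SC C" using a C SC_def[OF C(1)] by blast
    have aR: "a \<in> R" using a S0R by blast
    have bz: "bil (w' a) z = bil (v a) x + hbar * bil (g (w (v a))) t"
      unfolding z w'_def by (simp add: bil_add_right bil_scale_right weyl_bil[OF g nd] weyl_bil[OF w(1) nd])
    have eta_va: "\<eta> (v a) = \<eta> a" using eta_inv v(1) aR by blast
    show ?thesis
    proof (cases "C \<in> Bad")
      case False
      then have va: "v a = a" using v(2) C aSC by simp
      have "coef k (w a) \<noteq> 1" using False C aSC unfolding Bad_def by blast
      then have "coef k (w a) = 0" using kb wS wSR a by blast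
      then have "pos (g (w a)) \<and> bil (g (w a)) t = 0" using P1 wS wSR a by blast
      then show ?thesis using bz va hx[OF a] unfolding w'_def by simp
    next
      case True
      have gd: "good w k C (\<rho>f C) (jf C) (vf C)" using VF True by blast
      have va: "v a = vf C a" using v(2) C aSC True by simp
      have "v a \<in> XX C (\<rho>f C) (jf C)" using gd aSC unfolding va good_def by blast
      moreover have "\<rho>f C \<in> C" "\<forall>\<beta>\<in>C. pos (\<rho>f C - \<beta>)" "\<alpha> (jf C) \<in> SC C" "coef (jf C) (\<rho>f C) = 1"
        using gd unfolding good_def is_max_root_def by (auto simp: nonneg_comb_iff[OF SC_sub(1)[OF C(1)]])
      ultimately consider "v a \<in> SC C" "v a \<noteq> \<alpha> (jf C)" | "v a = - \<rho>f C"
        using XX_def[OF C(1)] by blast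
      then show ?thesis
      proof cases
        case 1
        obtain i where i: "v a = \<alpha> i" using 1 SC_sub[OF C(1)] by blast
        have ij: "i \<noteq> jf C" using 1(2) unfolding i by blast
        have iS: "\<alpha> i \<in> S0" using 1(1) SC_sub(2)[OF C(1)] unfolding i by blast
        have "coef k (w (\<alpha> i)) = 0" using gd 1(1) ij unfolding i good_def by blast
        then have "pos (g (w (\<alpha> i))) \<and> bil (g (w (\<alpha> i))) t = 0" using P1 wS wSR iS by blast
        then show ?thesis using bz i hx[OF iS] eta_va unfolding w'_def by simp
      next
        case 2
        define \<rho> where "\<rho> = \<rho>f C"
        have rC: "\<rho> \<in> C" and mr: "is_max_root C (SC C) \<rho>" and ck: "coef k (w \<rho>) = 1"
          using gd unfolding good_def \<rho>_def by blast+
        have rR: "\<rho> \<in> R" using rC C_iff[OF C(1)] by blast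
        have wrR: "w \<rho> \<in> R" using weylR[OF w(1) rR] .
        have pwr: "pos (w \<rho>)" using pos_of_coef[OF wrR, of k] ck by simp
        have P: "pos (- g (w \<rho>)) \<and> bil (g (w \<rho>)) t = -1" using P2 wrR pwr ck by blast
        have gwm: "g (w (v a)) = - g (w \<rho>)" using 2 weyl_minus[OF w(1)] weyl_minus[OF g] unfolding \<rho>_def by simp
        have sr: "supp (SC C) \<rho>" using rC C_iff[OF C(1)] by blast
        define c where "c \<gamma> = coef (inv \<alpha> \<gamma>) \<rho>" for \<gamma>
        have rep: "\<rho> = (\<Sum>\<gamma>\<in>SC C. c \<gamma> *s \<gamma>)" unfolding c_def using supp_repr[OF SC_sub(1)[OF C(1)] sr] .
        have "\<eta> \<rho> + (\<Sum>\<gamma>\<in>S0 \<inter> C. c \<gamma> * \<eta> \<gamma>) = hbar"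
          using cox C(1) mr rep unfolding coxeter_condition_def SC_def[OF C(1)] by blast
        then have cx: "\<eta> \<rho> + (\<Sum>\<gamma>\<in>SC C. c \<gamma> * \<eta> \<gamma>) = hbar" unfolding SC_def[OF C(1)] .
        have "bil \<rho> x = (\<Sum>\<gamma>\<in>SC C. c \<gamma> * bil \<gamma> x)"
          by (subst rep) (simp add: bil_sum_left bil_scale_left)
        also have "\<dots> = (\<Sum>\<gamma>\<in>SC C. c \<gamma> * \<eta> \<gamma>)" using hx SC_sub(2)[OF C(1)] by (intro sum.cong) auto
        finally have brx: "bil \<rho> x = hbar - \<eta> \<rho>" using cx by (simp add: algebra_simps)
        have er: "\<eta> (- \<rho>) = \<eta> \<rho>"
          using eta_inv reflect_weyl[OF rR] rR reflect_self[OF bilRR[OF rR]] by metis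
        have "bil (w' a) z = - bil \<rho> x + hbar"
          using bz 2 gwm P unfolding \<rho>_def by (simp add: bil_minus_left bil_minus_right)
        also have "\<dots> = \<eta> a" using brx er eta_va 2 unfolding \<rho>_def by simp
        finally show ?thesis using P gwm unfolding w'_def by simp
      qed
    qed
  qed
  define x' where "x' = inv w' z"
  have zx: "z = w' x'" unfolding x'_def using weyl_inv_r[OF nd w'] by simp
  have "x' \<in> Hyp \<eta> S0" unfolding Hyp_def
  proof (intro CollectI ballI)
    fix a assume a: "a \<in> S0"
    have "bil a x' = bil (w' a) (w' x')" using weyl_bil[OF w' nd] by simp
    then show "bil a x' = \<eta> a" using key[OF a] zx by simp
  qed
  moreover have "w' \<in> Wplus R \<alpha> S0" unfolding Wplus_def pos_roots_eq
    using w' key weylR[OF w'] S0R by blast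
  ultimately show "z \<in> Dset R \<alpha> \<eta> S0" unfolding Dset_def using zx by blast
qed

end


locale RSBT = RSB0 R \<alpha> b S0 for R :: "(complex^'n) set" and \<alpha> b S0 +
  fixes \<theta> :: "complex^'n" and n :: "'n \<Rightarrow> nat"
  assumes theta_max: "is_max_root R (range \<alpha>) \<theta>"
    and theta_coeffs: "\<theta> = (\<Sum>i\<in>UNIV. of_nat (n i) *s \<alpha> i)"
begin

lemma thetaR: "\<theta> \<in> R" using theta_max unfolding is_max_root_def by blast

lemma coef_theta: "coef i \<theta> = of_nat (n i)"
  by (subst theta_coeffs) (rule coef_comb)

lemma theta_pos: "pos \<theta>" unfolding pos_def coef_theta by simp

lemma theta_above: "\<beta> \<in> R \<Longrightarrow> pos (\<theta> - \<beta>)"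
  using theta_max unfolding is_max_root_def pos_nonneg by blast

lemma mtheta_not_simple: "- \<theta> \<noteq> \<alpha> i"
  using root_not_both[OF thetaR theta_pos] pos_alpha by (metis)

lemma kb: assumes "n k = 1" shows "\<forall>\<beta>\<in>R. pos \<beta> \<longrightarrow> coef k \<beta> = 0 \<or> coef k \<beta> = 1"
proof (intro ballI impI)
  fix \<beta> assume b: "\<beta> \<in> R" "pos \<beta>"
  have "1 - coef k \<beta> \<in> \<nat>" using theta_above[OF b(1)] assms unfolding pos_def
    by (metis coef_diff coef_theta of_nat_1)
  moreover have "1 + coef k \<beta> \<in> \<nat>" using b(2) unfolding pos_def by (metis Nats_1 Nats_add)
  moreover have "coef k \<beta> \<noteq> -1" using b(2) Nats_neg_zero[of 1] unfolding pos_def by (metis Nats_1 one_neq_zero)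
  ultimately show "coef k \<beta> = 0 \<or> coef k \<beta> = 1" using Nats_pm1 by blast
qed

lemma perm_formula:
  assumes g: "g \<in> weyl_group R" and gp: "g (\<alpha> p) = - \<theta>"
    and gi: "\<forall>i. i \<noteq> p \<longrightarrow> g (\<alpha> i) \<in> range \<alpha> \<and> g (\<alpha> i) \<noteq> \<alpha> q"
    and b: "pos \<beta>"
  shows "coef q (g \<beta>) = - of_nat (natc p \<beta>) * coef q \<theta>"
    and "natc p \<beta> = 0 \<Longrightarrow> pos (g \<beta>)"
proof -
  have "\<beta> = (\<Sum>i\<in>UNIV. coef i \<beta> *s \<alpha> i)" by (rule expand)
  also have "\<dots> = (\<Sum>i\<in>UNIV. of_nat (natc i \<beta>) *s \<alpha> i)" using pos_coef[OF b] by simp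
  finally have eq: "\<beta> = (\<Sum>i\<in>UNIV. of_nat (natc i \<beta>) *s \<alpha> i)" .
  have "g \<beta> = g (\<Sum>i\<in>UNIV. of_nat (natc i \<beta>) *s \<alpha> i)" using arg_cong[OF eq, of g] .
  also have "\<dots> = (\<Sum>i\<in>UNIV. of_nat (natc i \<beta>) *s g (\<alpha> i))" by (simp add: weyl_sum[OF g] weyl_scale[OF g])
  finally have e: "g \<beta> = (\<Sum>i\<in>UNIV. of_nat (natc i \<beta>) *s g (\<alpha> i))" .
  have "coef q (g \<beta>) = (\<Sum>i\<in>UNIV. of_nat (natc i \<beta>) * coef q (g (\<alpha> i)))"
    unfolding e by (simp add: coef_sum coef_scale)
  also have "\<dots> = (\<Sum>i\<in>UNIV. if i = p then - of_nat (natc p \<beta>) * coef q \<theta> else 0)"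
  proof (rule sum.cong)
    fix i show "of_nat (natc i \<beta>) * coef q (g (\<alpha> i)) = (if i = p then - of_nat (natc p \<beta>) * coef q \<theta> else 0)"
    proof (cases "i = p")
      case True then show ?thesis using gp by (simp add: coef_minus)
    next
      case False
      then obtain m where m: "g (\<alpha> i) = \<alpha> m" "m \<noteq> q" using gi by blast
      then show ?thesis using False by (simp add: coef_alpha)
    qed
  qed simp
  finally show "coef q (g \<beta>) = - of_nat (natc p \<beta>) * coef q \<theta>" by simp
  assume np: "natc p \<beta> = 0"
  have "pos (of_nat (natc i \<beta>) *s g (\<alpha> i))" for i
  proof (cases "i = p")
    case True then show ?thesis using np pos_zero by simp
  next
    case False
    then obtain m where "g (\<alpha> i) = \<alpha> m" using gi by blast
    then show ?thesis using pos_scale_nat[OF pos_alpha] by simp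
  qed
  then show "pos (g \<beta>)" unfolding e by (intro pos_sum)
qed

lemma pi_D:
  assumes ns: "n s = 1" and U: "U \<in> weyl_group R"
    and UT: "U ` insert (- \<theta>) (range \<alpha>) = insert (- \<theta>) (range \<alpha>)"
    and Us: "U (\<alpha> s) = - \<theta>"
    and eta_inv: "\<forall>w\<in>weyl_group R. \<forall>\<beta>\<in>R. \<eta> (w \<beta>) = \<eta> \<beta>"
    and cox: "coxeter_condition R S0 \<eta> hbar"
  shows "(\<lambda>x. inv U x + hbar *s b s) ` Dset R \<alpha> \<eta> S0 = Dset R \<alpha> \<eta> S0"
    and "(\<lambda>x. U x + hbar *s (- U (b s))) ` Dset R \<alpha> \<eta> S0 \<subseteq> Dset R \<alpha> \<eta> S0"
    and "\<And>y. inv U (U y + hbar *s (- U (b s))) + hbar *s b s = y"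
    and "\<And>y. U (inv U y + hbar *s b s) + hbar *s (- U (b s)) = y"
proof -
  define T where "T = insert (- \<theta>) (range \<alpha>)"
  have nd: "nondeg R" using nondegR .
  have bU: "bij U" using weyl_bij[OF nd U] .
  have injU: "inj U" using bU bij_is_inj by blast
  have Ui: "inv U \<in> weyl_group R" using weyl_inv_in[OF nd U] .
  have UTT: "U ` T = T" using UT unfolding T_def .
  have mt: "- \<theta> \<in> T" unfolding T_def by blast
  have aT: "\<alpha> i \<in> T" for i unfolding T_def by blast
  have "U (- \<theta>) \<in> T" using UTT mt by blast
  moreover have "U (- \<theta>) \<noteq> - \<theta>"
  proof
    assume "U (- \<theta>) = - \<theta>"
    then have "U (- \<theta>) = U (\<alpha> s)" using Us by simp
    then show False using injU mtheta_not_simple by (metis injD)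
  qed
  ultimately obtain kk where kk: "U (- \<theta>) = \<alpha> kk" unfolding T_def by blast
  have Ui_other: "U (\<alpha> i) \<in> range \<alpha> \<and> U (\<alpha> i) \<noteq> \<alpha> kk" if "i \<noteq> s" for i
  proof -
    have "U (\<alpha> i) \<in> T" using UTT aT by blast
    moreover have "U (\<alpha> i) \<noteq> - \<theta>"
    proof
      assume "U (\<alpha> i) = - \<theta>" then have "U (\<alpha> i) = U (\<alpha> s)" using Us by simp
      then have "\<alpha> i = \<alpha> s" using injU by (metis injD)
      then show False using that inj_alpha by (metis injD)
    qed
    moreover have "U (\<alpha> i) \<noteq> \<alpha> kk"
    proof
      assume "U (\<alpha> i) = \<alpha> kk" then have "U (\<alpha> i) = U (- \<theta>)" using kk by simp
      then have "\<alpha> i = - \<theta>" using injU by (metis injD)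
      then show False using mtheta_not_simple by metis
    qed
    ultimately show ?thesis unfolding T_def by blast
  qed
  have invk: "inv U (\<alpha> kk) = - \<theta>" using kk weyl_inv_l[OF nd U] by metis
  have inv_other: "inv U (\<alpha> i) \<in> range \<alpha> \<and> inv U (\<alpha> i) \<noteq> \<alpha> s" if "i \<noteq> kk" for i
  proof -
    obtain y where y: "y \<in> T" "\<alpha> i = U y" using UTT aT by (metis imageE)
    have iy: "inv U (\<alpha> i) = y" using y weyl_inv_l[OF nd U] by metis
    have "y \<noteq> - \<theta>" using y kk that inj_alpha by (metis injD)
    moreover have "y \<noteq> \<alpha> s" using y Us mtheta_not_simple by metis
    ultimately show ?thesis using iy y(1) unfolding T_def by blast
  qed
  have nkk: "n kk = 1"
  proof -
    have "coef kk (U \<theta>) = - of_nat (natc s \<theta>) * coef kk \<theta>"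
      using perm_formula(1)[OF U Us _ theta_pos] Ui_other by blast
    moreover have "natc s \<theta> = 1" using pos_coef[OF theta_pos, of s] coef_theta[of s] ns by simp
    moreover have "U \<theta> = - \<alpha> kk" using kk weyl_minus[OF U, of \<theta>] by (metis minus_minus)
    ultimately have "(- 1 :: complex) = - of_nat (n kk)" by (simp add: coef_minus coef_alpha coef_theta)
    then show ?thesis by (metis minus_equation_iff of_nat_1 of_nat_eq_iff)
  qed
  have m1n: "(-1::complex) \<notin> \<nat>" using Nats_neg_zero[of 1] by auto
  have ncase: "natc p \<beta> = 0 \<or> natc p \<beta> = 1" if "pos \<beta>" "coef p \<beta> = 0 \<or> coef p \<beta> = 1" for p \<beta>
    using that pos_coef[OF that(1), of p] by (metis of_nat_0_eq_iff of_nat_eq_1_iff)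
  have fw: "(\<lambda>x. inv U x + hbar *s b s) ` Dset R \<alpha> \<eta> S0 \<subseteq> Dset R \<alpha> \<eta> S0"
  proof (rule affine_inv[OF Ui kb[OF nkk] _ _ eta_inv cox])
    show "\<forall>\<beta>\<in>R. pos \<beta> \<longrightarrow> coef kk \<beta> = 0 \<longrightarrow> pos (inv U \<beta>) \<and> bil (inv U \<beta>) (b s) = 0"
    proof (intro ballI impI)
      fix \<beta> assume b: "\<beta> \<in> R" "pos \<beta>" "coef kk \<beta> = 0"
      have n0: "natc kk \<beta> = 0" using pos_coef[OF b(2), of kk] b(3) by simp
      show "pos (inv U \<beta>) \<and> bil (inv U \<beta>) (b s) = 0"
        using perm_formula[OF Ui invk _ b(2), of s] inv_other n0 unfolding coef_def by simp
    qed
    show "\<forall>\<beta>\<in>R. pos \<beta> \<longrightarrow> coef kk \<beta> = 1 \<longrightarrow> pos (- inv U \<beta>) \<and> bil (inv U \<beta>) (b s) = -1"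
    proof (intro ballI impI)
      fix \<beta> assume b: "\<beta> \<in> R" "pos \<beta>" "coef kk \<beta> = 1"
      have n1: "natc kk \<beta> = 1" using pos_coef[OF b(2), of kk] b(3) by (metis of_nat_eq_1_iff)
      have c: "coef s (inv U \<beta>) = -1"
        using perm_formula(1)[OF Ui invk _ b(2), of s] inv_other n1 coef_theta[of s] ns by simp
      have "inv U \<beta> \<in> R" using weylR[OF Ui b(1)] .
      then have "pos (- inv U \<beta>)" using neg_of_coef[of "inv U \<beta>" s] c by simp
      then show "pos (- inv U \<beta>) \<and> bil (inv U \<beta>) (b s) = -1" using c unfolding coef_def by simp
    qed
  qed
  show bw: "(\<lambda>x. U x + hbar *s (- U (b s))) ` Dset R \<alpha> \<eta> S0 \<subseteq> Dset R \<alpha> \<eta> S0"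
  proof (rule affine_inv[OF U kb[OF ns] _ _ eta_inv cox])
    have bb: "bil (U \<beta>) (- U (b s)) = - coef s \<beta>" for \<beta>
      unfolding coef_def by (simp add: bil_minus_right weyl_bil[OF U nd])
    show "\<forall>\<beta>\<in>R. pos \<beta> \<longrightarrow> coef s \<beta> = 0 \<longrightarrow> pos (U \<beta>) \<and> bil (U \<beta>) (- U (b s)) = 0"
    proof (intro ballI impI)
      fix \<beta> assume b: "\<beta> \<in> R" "pos \<beta>" "coef s \<beta> = 0"
      have n0: "natc s \<beta> = 0" using pos_coef[OF b(2), of s] b(3) by simp
      show "pos (U \<beta>) \<and> bil (U \<beta>) (- U (b s)) = 0"
        using perm_formula(2)[OF U Us _ b(2) n0, of kk] Ui_other bb b(3) by simp
    qed
    show "\<forall>\<beta>\<in>R. pos \<beta> \<longrightarrow> coef s \<beta> = 1 \<longrightarrow> pos (- U \<beta>) \<and> bil (U \<beta>) (- U (b s)) = -1"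
    proof (intro ballI impI)
      fix \<beta> assume b: "\<beta> \<in> R" "pos \<beta>" "coef s \<beta> = 1"
      have n1: "natc s \<beta> = 1" using pos_coef[OF b(2), of s] b(3) by (metis of_nat_eq_1_iff)
      have c: "coef kk (U \<beta>) = -1"
        using perm_formula(1)[OF U Us _ b(2), of kk] Ui_other n1 coef_theta[of kk] nkk by simp
      have "U \<beta> \<in> R" using weylR[OF U b(1)] .
      then have "pos (- U \<beta>)" using neg_of_coef[of "U \<beta>" kk] c by simp
      then show "pos (- U \<beta>) \<and> bil (U \<beta>) (- U (b s)) = -1" using bb b(3) by simp
    qed
  qed
  show inv1: "inv U (U y + hbar *s (- U (b s))) + hbar *s b s = y" for y
    by (simp add: weyl_add[OF Ui] weyl_diff[OF Ui] weyl_scale[OF Ui] weyl_minus[OF Ui] weyl_inv_l[OF nd U])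
  show "U (inv U y + hbar *s b s) + hbar *s (- U (b s)) = y" for y
    by (simp add: weyl_add[OF U] weyl_scale[OF U] weyl_minus[OF U] weyl_inv_r[OF nd U] vector_smult_rneg)
  have "Dset R \<alpha> \<eta> S0 \<subseteq> (\<lambda>x. inv U x + hbar *s b s) ` Dset R \<alpha> \<eta> S0"
  proof
    fix y assume y: "y \<in> Dset R \<alpha> \<eta> S0"
    have "U y + hbar *s (- U (b s)) \<in> Dset R \<alpha> \<eta> S0" using bw y by blast
    moreover have "y = inv U (U y + hbar *s (- U (b s))) + hbar *s b s" using inv1 by simp
    ultimately show "y \<in> (\<lambda>x. inv U x + hbar *s b s) ` Dset R \<alpha> \<eta> S0" by blast
  qed
  then show "(\<lambda>x. inv U x + hbar *s b s) ` Dset R \<alpha> \<eta> S0 = Dset R \<alpha> \<eta> S0" using fw by blast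
qed

end


lemma Ck_affine: assumes L: "bounded_linear L"
  shows "Ck k f \<Longrightarrow> Ck k (\<lambda>x. f (L x + c))"
proof (induction k arbitrary: f)
  case 0
  have "continuous_on UNIV (\<lambda>x. L x + c)"
    by (intro continuous_intros bounded_linear.continuous_on[OF L])
  moreover have "continuous_on UNIV f" using 0 by simp
  ultimately show ?case by (simp add: continuous_on_compose2[of UNIV f UNIV "\<lambda>x. L x + c"])
next
  case (Suc k)
  have df: "\<And>x. f differentiable (at x)" and dk: "\<And>v. Ck k (\<lambda>x. frechet_derivative f (at x) v)"
    using Suc.prems by auto
  have dA: "((\<lambda>x. L x + c) has_derivative L) (at x)" for x
    using bounded_linear.has_derivative[OF L has_derivative_ident] by (auto intro!: derivative_eq_intros)
  have hd: "((\<lambda>x. f (L x + c)) has_derivative (\<lambda>v. frechet_derivative f (at (L x + c)) (L v))) (at x)" for x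
    using has_derivative_compose[OF dA, of f] df frechet_derivative_works by blast
  have fd: "frechet_derivative (\<lambda>x. f (L x + c)) (at x) = (\<lambda>v. frechet_derivative f (at (L x + c)) (L v))" for x
    using frechet_derivative_at[OF hd] by simp
  have "(\<lambda>x. f (L x + c)) differentiable (at x)" for x using hd differentiableI by blast
  moreover have "Ck k (\<lambda>x. frechet_derivative (\<lambda>x. f (L x + c)) (at x) v)" for v
    unfolding fd using Suc.IH[OF dk[of "L v"]] by simp
  ultimately show ?case by simp
qed

lemma smooth_affine: "bounded_linear L \<Longrightarrow> smooth_fun f \<Longrightarrow> smooth_fun (\<lambda>x. f (L x + c))"
  unfolding smooth_fun_def using Ck_affine by blast

lemma scaleR_vec_complex: "(r::real) *\<^sub>R (x :: complex^'n) = (complex_of_real r) *s x"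
unfolding vec_eq_iff proof
  fix i show "(r *\<^sub>R x) $ i = (complex_of_real r *s x) $ i"
    unfolding vector_scaleR_component vector_smult_component by (rule scaleR_conv_of_real)
qed

lemma weyl_bounded_linear: "w \<in> weyl_group C \<Longrightarrow> bounded_linear w"
proof -
  assume w: "w \<in> weyl_group C"
  have "linear w"
    by (rule linearI) (simp_all add: weyl_add[OF w] scaleR_vec_complex weyl_scale[OF w])
  then show ?thesis using linear_conv_bounded_linear by blast
qed

context RSB begin

lemma weyl_coroot: "w \<in> weyl_group R \<Longrightarrow> \<beta> \<in> R \<Longrightarrow> w (coroot \<beta>) = coroot (w \<beta>)"
  unfolding coroot_def using weyl_scale weyl_bil nondegR by metis

lemma weyl_imR: assumes w: "w \<in> weyl_group R" shows "w ` R = R" "inj_on w R"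
proof -
  have "inj w" using weyl_bij[OF nondegR w] bij_is_inj by blast
  then show "inj_on w R" by (simp add: inj_on_def inj_def)
  then show "w ` R = R" using endo_inj_surj[OF finR] weylR[OF w] by blast
qed

lemma lattice_pres: assumes w: "w \<in> weyl_group R" and l: "l \<in> coroot_lattice R"
  shows "w l \<in> coroot_lattice R"
proof -
  obtain kf where l: "l = (\<Sum>\<beta>\<in>R. of_int (kf \<beta>) *s coroot \<beta>)" using l unfolding coroot_lattice_def by blast
  have "w l = (\<Sum>\<beta>\<in>R. of_int (kf \<beta>) *s coroot (w \<beta>))"
    unfolding l by (simp add: weyl_sum[OF w] weyl_scale[OF w] weyl_coroot[OF w])
  also have "\<dots> = (\<Sum>\<beta>\<in>R. of_int (kf (inv w (w \<beta>))) *s coroot (w \<beta>))"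
    using weyl_inv_l[OF nondegR w] by simp
  also have "\<dots> = (\<Sum>\<gamma>\<in>w ` R. of_int (kf (inv w \<gamma>)) *s coroot \<gamma>)"
    using sum.reindex[OF weyl_imR(2)[OF w], of "\<lambda>\<gamma>. of_int (kf (inv w \<gamma>)) *s coroot \<gamma>"] by simp
  also have "\<dots> = (\<Sum>\<gamma>\<in>R. of_int (kf (inv w \<gamma>)) *s coroot \<gamma>)" using weyl_imR(1)[OF w] by simp
  finally show ?thesis unfolding coroot_lattice_def by (auto intro!: exI[of _ "\<lambda>\<gamma>. kf (inv w \<gamma>)"])
qed

lemma Fspace_affine: assumes w: "w \<in> weyl_group R" and f: "f \<in> Fspace R"
  shows "(\<lambda>x. f (w x + c)) \<in> Fspace R"
proof -
  have sm: "smooth_fun (\<lambda>x. f (w x + c))" using smooth_affine[OF weyl_bounded_linear[OF w]] f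
    unfolding Fspace_def by blast
  have "f (w (x + (2 * of_real pi * \<i>) *s l) + c) = f (w x + c)" if l: "l \<in> coroot_lattice R" for x l
  proof -
    have e: "w (x + (2 * of_real pi * \<i>) *s l) + c = (w x + c) + (2 * of_real pi * \<i>) *s w l"
      by (simp add: weyl_add[OF w] weyl_scale[OF w] algebra_simps)
    have "f ((w x + c) + (2 * of_real pi * \<i>) *s w l) = f (w x + c)"
      using f lattice_pres[OF w l] unfolding Fspace_def by blast
    then show ?thesis unfolding e .
  qed
  then show ?thesis using sm unfolding Fspace_def by blast
qed

end


theorem mainTheorem6:
  fixes R :: "(complex^'n) set"
    and \<alpha> :: "'n \<Rightarrow> complex^'n"
    and \<theta> :: "complex^'n"
    and n :: "'n \<Rightarrow> nat"
    and b :: "'n \<Rightarrow> complex^'n"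
    and u :: "'n \<Rightarrow> (complex^'n \<Rightarrow> complex^'n)"
    and hbar :: complex
    and \<eta> :: "complex^'n \<Rightarrow> complex"
    and S0 :: "(complex^'n) set"
  assumes rs: "root_system R" and red: "reduced_rs R" and irr: "irreducible_rs R"
    and base: "is_base R \<alpha>"
    and theta_max: "is_max_root R (range \<alpha>) \<theta>"
    and theta_coeffs: "\<theta> = (\<Sum>i\<in>UNIV. of_nat (n i) *s \<alpha> i)"
    and coweights: "\<forall>i j. bil (\<alpha> i) (b j) = (if i = j then 1 else 0)"
    and u_def: "\<forall>r. n r = 1 \<longrightarrow> u r \<in> weyl_group R
                  \<and> u r ` insert (- \<theta>) (range \<alpha>) = insert (- \<theta>) (range \<alpha>)
                  \<and> u r (\<alpha> r) = - \<theta>"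
    and hbar_nz: "hbar \<noteq> 0"
    and hbar_irr: "\<forall>q::rat. hbar \<noteq> of_real pi * \<i> * of_rat q"
    and eta_inv: "\<forall>w\<in>weyl_group R. \<forall>\<beta>\<in>R. \<eta> (w \<beta>) = \<eta> \<beta>"
    and S0_sub: "S0 \<subseteq> range \<alpha>"
    and coxeter: "coxeter_condition R S0 \<eta> hbar"
  shows "\<forall>r\<in>minusc_set n.
           pi_map u b hbar r ` Dset R \<alpha> \<eta> S0 = Dset R \<alpha> \<eta> S0
         \<and> pi_fun u b hbar r ` ideal_D R (Dset R \<alpha> \<eta> S0) = ideal_D R (Dset R \<alpha> \<eta> S0)"
proof -
  interpret RSBT R \<alpha> b S0 \<theta> n
    by unfold_locales (use rs red base coweights S0_sub theta_max theta_coeffs in auto)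
  define D where "D = Dset R \<alpha> \<eta> S0"
  show ?thesis
  proof (intro ballI)
    fix r assume r: "r \<in> minusc_set n"
    consider "r = None" | s where "r = Some s" "n s = 1" using r unfolding minusc_set_def by blast
    then show "pi_map u b hbar r ` Dset R \<alpha> \<eta> S0 = Dset R \<alpha> \<eta> S0
         \<and> pi_fun u b hbar r ` ideal_D R (Dset R \<alpha> \<eta> S0) = ideal_D R (Dset R \<alpha> \<eta> S0)"
    proof cases
      case 1
      have "pi_fun u b hbar r f = f" for f unfolding pi_fun_def pi_map_def 1 by simp
      then show ?thesis unfolding 1 pi_map_def by simp
    next
      case 2
      define U where "U = u s"
      have U: "U \<in> weyl_group R" "U ` insert (- \<theta>) (range \<alpha>) = insert (- \<theta>) (range \<alpha>)"
        "U (\<alpha> s) = - \<theta>" using u_def 2(2) unfolding U_def by blast+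
      have nd: "nondeg R" using nondegR .
      have Ui: "inv U \<in> weyl_group R" using weyl_inv_in[OF nd U(1)] .
      define p where "p = (\<lambda>x. inv U x + hbar *s b s)"
      define p' where "p' = (\<lambda>y. U y + hbar *s (- U (b s)))"
      note PD = pi_D[OF 2(2) U eta_inv coxeter]
      have pm: "pi_map u b hbar r = p" unfolding pi_map_def p_def U_def 2 by simp
      have c1: "p \<circ> p' = id" "p' \<circ> p = id" unfolding p_def p'_def using PD(3,4) by (auto simp: fun_eq_iff)
      have ip: "inv p = p'" using inv_unique_comp[OF c1] .
      have pf: "pi_fun u b hbar r f = (\<lambda>x. f (U x + hbar *s (- U (b s))))" for f
        unfolding pi_fun_def pm ip p'_def by (simp add: comp_def)
      have Dp: "p ` D = D" unfolding p_def D_def using PD(1) .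
      have Dp': "p' ` D \<subseteq> D" unfolding p'_def D_def using PD(2) .
      have "(\<lambda>f. pi_fun u b hbar r f) ` ideal_D R D = ideal_D R D"
      proof
        show "(\<lambda>f. pi_fun u b hbar r f) ` ideal_D R D \<subseteq> ideal_D R D"
        proof
          fix g assume "g \<in> (\<lambda>f. pi_fun u b hbar r f) ` ideal_D R D"
          then obtain f where f: "f \<in> Fspace R" "\<forall>x\<in>D. f x = 0" and g: "g = pi_fun u b hbar r f"
            unfolding ideal_D_def by blast
          have "g \<in> Fspace R" unfolding g pf using Fspace_affine[OF U(1) f(1)] .
          moreover have "\<forall>x\<in>D. g x = 0"
          proof
            fix x assume "x \<in> D"
            then have "p' x \<in> D" using Dp' by blast
            then show "g x = 0" unfolding g pf using f(2) unfolding p'_def by blast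
          qed
          ultimately show "g \<in> ideal_D R D" unfolding ideal_D_def by blast
        qed
        show "ideal_D R D \<subseteq> (\<lambda>f. pi_fun u b hbar r f) ` ideal_D R D"
        proof
          fix g assume g: "g \<in> ideal_D R D"
          define f where "f = (\<lambda>x. g (inv U x + hbar *s b s))"
          have "f \<in> Fspace R" unfolding f_def using Fspace_affine[OF Ui] g unfolding ideal_D_def by blast
          moreover have "\<forall>x\<in>D. f x = 0"
          proof
            fix x assume "x \<in> D"
            then have "p x \<in> D" using Dp by blast
            then show "f x = 0" using g unfolding f_def p_def ideal_D_def by blast
          qed
          ultimately have fI: "f \<in> ideal_D R D" unfolding ideal_D_def by blast
          have "pi_fun u b hbar r f = g" unfolding pf f_def using PD(3) by simp
          then show "g \<in> (\<lambda>f. pi_fun u b hbar r f) ` ideal_D R D" using fI by force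
        qed
      qed
      then show ?thesis using pm Dp unfolding D_def p_def by simp
    qed
  qed
qed



end
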